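(* Let $\mu>0$ and $b>0$. Let $Z_1,Z_2,\dots$ be independent Normal random variables with mean $\mu$ and variance $1$, let $S_m=\sum_{i=1}^m Z_i$, and let $\tau=\min\{m: S_m<-b \text{ or } S_m>b\}$. Let $\Phi$ be the standard Normal distribution function and $R(a)=\frac{\Phi(a)}{1-\Phi(a)}$. Then $$R(-\mu)\,e^{-2\mu b}<\mathbb{E}[e^{-2\mu S_\tau}\mid S_\tau>b]<e^{-2\mu b},$$ $$e^{2\mu b}<\mathbb{E}[e^{-2\mu S_\tau}\mid S_\tau<-b]<e^{2\mu b}R(\mu).$$ *)

theory Defs
  imports "HOL-Probability.Probability"
begin

definition Phi :: "real \<Rightarrow> real" where
  "Phi a = cdf (density lborel std_normal_density) a"

definition Rratio :: "real \<Rightarrow> real" where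
  "Rratio a = Phi a / (1 - Phi a)"

definition psum :: "(nat \<Rightarrow> 'a \<Rightarrow> real) \<Rightarrow> nat \<Rightarrow> 'a \<Rightarrow> real" where
  "psum Z m \<omega> = (\<Sum>i\<in>{1..m}. Z i \<omega>)"

text \<open>Exit time tau = min{m >= 1 : S_m < -b or S_m > b} (meaningful when the set is nonempty).\<close>
definition exit_time :: "(nat \<Rightarrow> 'a \<Rightarrow> real) \<Rightarrow> real \<Rightarrow> 'a \<Rightarrow> nat" where
  "exit_time Z b \<omega> = (LEAST m. 1 \<le> m \<and> (psum Z m \<omega> < - b \<or> psum Z m \<omega> > b))"

definition exits :: "(nat \<Rightarrow> 'a \<Rightarrow> real) \<Rightarrow> real \<Rightarrow> 'a \<Rightarrow> bool" where
  "exits Z b \<omega> \<longleftrightarrow> (\<exists>m\<ge>1. psum Z m \<omega> < - b \<or> psum Z m \<omega> > b)"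

definition stopped_sum :: "(nat \<Rightarrow> 'a \<Rightarrow> real) \<Rightarrow> real \<Rightarrow> 'a \<Rightarrow> real" where
  "stopped_sum Z b \<omega> = psum Z (exit_time Z b \<omega>) \<omega>"

definition cond_exp_event :: "'a measure \<Rightarrow> ('a \<Rightarrow> real) \<Rightarrow> 'a set \<Rightarrow> real" where
  "cond_exp_event M X A = (\<integral>\<omega>. indicator A \<omega> * X \<omega> \<partial>M) / measure M A"

end

theory Submission
  imports Defs
begin


lemma nd_shift: "normal_density m 1 (w + c) = exp (c*m - c^2/2) * exp (-c*w) * normal_density m 1 w"
proof -
  have "exp (c*m - c^2/2) * exp (-c*w) * normal_density m 1 w = 1/sqrt(2*pi) * exp((c*m - c^2/2) + (-c*w) + (- ((w - m)^2)/2))"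
    unfolding normal_density_def exp_add by simp
  also have "(c*m - c^2/2) + (-c*w) + (- ((w - m)^2)/2) = - ((w+c-m)^2)/2"
    by (simp add: power2_eq_square field_simps)
  also have "1/sqrt(2*pi) * exp(- ((w+c-m)^2)/2) = normal_density m 1 (w+c)"
    unfolding normal_density_def by simp
  finally show ?thesis by (rule sym)
qed

lemma nd_tilt: "exp (-2*m*w) * normal_density m 1 w = normal_density (-m) 1 w"
proof -
  have "exp (-2*m*w) * normal_density m 1 w = 1/sqrt(2*pi) * exp((-2*m*w) + (- ((w - m)^2)/2))"
    unfolding normal_density_def exp_add by simp
  also have "(-2*m*w) + (- ((w - m)^2)/2) = - ((w - (-m))^2)/2"
    by (simp add: power2_eq_square field_simps)
  also have "1/sqrt(2*pi) * exp(- ((w - (-m))^2)/2) = normal_density (-m) 1 w"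
    unfolding normal_density_def by simp
  finally show ?thesis .
qed

lemma nd_neg: "normal_density m 1 (- x) = normal_density (-m) 1 x"
proof -
  have "(- x - m)^2 = (x - (-m))^2" by (simp add: power2_eq_square field_simps)
  then show ?thesis unfolding normal_density_def by simp
qed

lemma pos_int:
  fixes g :: "real \<Rightarrow> real"
  assumes "integrable lborel g" "\<And>w. 0 \<le> g w" "\<And>w. 0 < w \<Longrightarrow> w \<noteq> z \<Longrightarrow> 0 < g w"
  shows "0 < integral\<^sup>L lborel g"
proof -
  have ge: "0 \<le> integral\<^sup>L lborel g" using assms(2) by (simp add: integral_nonneg_AE)
  have "integral\<^sup>L lborel g \<noteq> 0"
  proof
    assume "integral\<^sup>L lborel g = 0"
    then have "AE x in lborel. g x = 0"
      using integral_nonneg_eq_0_iff_AE[OF assms(1)] assms(2) by auto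
    then have "AE x in lborel. x \<notin> {0<..<1::real}"
      using AE_lborel_singleton[of z]
      by eventually_elim (use assms(3) in force)
    moreover have s: "{0<..<1::real} \<in> sets lborel" by simp
    moreover have e: "{x\<in>space lborel. \<not> (x \<notin> {0<..<1::real})} = {0<..<1}" by auto
    ultimately have "emeasure lborel {0<..<1::real} = 0"
      using AE_iff_measurable[OF s e] by blast
    then show False by simp
  qed
  with ge show ?thesis by simp
qed


lemma nd_add: "normal_density m 1 (w + c) = normal_density (m - c) 1 w"
  unfolding normal_density_def by (simp add: algebra_simps)

lemma alg3: assumes "(IT::real) = (A - f0*L) - (l0*F - f0*l0*P)" "F = f0*P" shows "P*IT = A*P - F*L"
  unfolding assms by (simp add: algebra_simps)

lemma cheb_id:
  fixes p f l :: "real \<Rightarrow> real"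
  assumes ip: "integrable lborel p" and ifp: "integrable lborel (\<lambda>w. f w * p w)"
    and ilp: "integrable lborel (\<lambda>w. l w * p w)" and iflp: "integrable lborel (\<lambda>w. f w * l w * p w)"
    and f0: "f0 * integral\<^sup>L lborel p = integral\<^sup>L lborel (\<lambda>w. f w * p w)"
  shows "integral\<^sup>L lborel p * integral\<^sup>L lborel (\<lambda>w. (f w - f0) * (l w - l0) * p w)
     = integral\<^sup>L lborel (\<lambda>w. f w * l w * p w) * integral\<^sup>L lborel p
       - integral\<^sup>L lborel (\<lambda>w. f w * p w) * integral\<^sup>L lborel (\<lambda>w. l w * p w)"
proof -
  have eq: "(\<lambda>w. (f w - f0) * (l w - l0) * p w) =
    (\<lambda>w. (f w * l w * p w - f0 * (l w * p w)) - (l0 * (f w * p w) - (f0 * l0) * p w))"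
    by (auto simp: algebra_simps)
  have "integral\<^sup>L lborel (\<lambda>w. (f w - f0) * (l w - l0) * p w) =
     (integral\<^sup>L lborel (\<lambda>w. f w * l w * p w) - f0 * integral\<^sup>L lborel (\<lambda>w. l w * p w))
     - (l0 * integral\<^sup>L lborel (\<lambda>w. f w * p w) - (f0 * l0) * integral\<^sup>L lborel p)"
    unfolding eq
    by (intro has_bochner_integral_integral_eq has_bochner_integral_diff has_bochner_integral_mult_right
          has_bochner_integral_integrable ip ifp ilp iflp)
  from alg3[OF this f0[symmetric]] show ?thesis .
qed

definition Gf :: "real \<Rightarrow> real \<Rightarrow> real" where
  "Gf m c = (\<integral>w. indicator {0<..} w * exp (-2*m*w) * normal_density m 1 (w + c) \<partial>lborel)"
definition Hf :: "real \<Rightarrow> real \<Rightarrow> real" where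
  "Hf m c = (\<integral>w. indicator {0<..} w * normal_density m 1 (w + c) \<partial>lborel)"

lemma int_H: "integrable lborel (\<lambda>w. indicator {0<..} w * normal_density m 1 (w + c))"
  unfolding nd_add by (subst mult.commute, intro integrable_real_mult_indicator) auto

lemma int_G: assumes "c \<ge> 0"
  shows "integrable lborel (\<lambda>w. indicator {0<..} w * exp (-2*m*w) * normal_density m 1 (w + c))"
proof (rule Bochner_Integration.integrable_bound[of _ "normal_density (c - m) 1"])
  show "integrable lborel (normal_density (c - m) 1)" by simp
  show "(\<lambda>w. indicator {0<..} w * exp (-2*m*w) * normal_density m 1 (w + c)) \<in> borel_measurable lborel"
    by measurable
  show "AE w in lborel. norm (indicator {0<..} w * exp (-2*m*w) * normal_density m 1 (w + c)) \<le> norm (normal_density (c - m) 1 w)"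
  proof (rule AE_I2)
    fix w :: real
    have e: "exp (-2*m*w) * normal_density m 1 (w + c) = exp (-2*c*w) * normal_density (c - m) 1 w"
    proof -
      have "exp(-2*m*w) = exp(-2*c*w) * exp(-2*(m-c)*w)" by (simp add: exp_add[symmetric] algebra_simps)
      then have "exp (-2*m*w) * normal_density m 1 (w + c) = exp(-2*c*w) * (exp(-2*(m-c)*w) * normal_density (m - c) 1 w)"
        unfolding nd_add by simp
      also have "\<dots> = exp (-2*c*w) * normal_density (c - m) 1 w" unfolding nd_tilt by simp
      finally show ?thesis .
    qed
    show "norm (indicator {0<..} w * exp (-2*m*w) * normal_density m 1 (w + c)) \<le> norm (normal_density (c - m) 1 w)"
    proof (cases "0 < w")
      case True
      then have "exp (-2*c*w) \<le> 1" using assms by simp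
      then have "exp (-2*c*w) * normal_density (c - m) 1 w \<le> normal_density (c - m) 1 w"
        by (simp add: mult_left_le_one_le)
      then show ?thesis using True by (subst mult.assoc, subst e) simp
    qed simp
  qed
qed


lemma cheb_int:
  fixes p f l :: "real \<Rightarrow> real"
  assumes ip: "integrable lborel p" and ifp: "integrable lborel (\<lambda>w. f w * p w)"
    and ilp: "integrable lborel (\<lambda>w. l w * p w)" and iflp: "integrable lborel (\<lambda>w. f w * l w * p w)"
  shows "integrable lborel (\<lambda>w. (f w - f0) * (l w - l0) * p w)"
proof -
  have eq: "(\<lambda>w. (f w - f0) * (l w - l0) * p w) =
    (\<lambda>w. (f w * l w * p w - f0 * (l w * p w)) - (l0 * (f w * p w) - (f0 * l0) * p w))"
    by (auto simp: algebra_simps)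
  show ?thesis unfolding eq
    apply (rule Bochner_Integration.integrable_diff)
     apply (rule Bochner_Integration.integrable_diff)
      apply (rule iflp)
     apply (rule integrable_mult_right, rule ilp)
    apply (rule Bochner_Integration.integrable_diff)
     apply (rule integrable_mult_right, rule ifp)
    apply (rule integrable_mult_right, rule ip)
    done
qed

lemma sp_same:
  fixes a c w u :: real
  assumes "a > 0" "c \<ge> 0"
  shows "0 \<le> (exp(-a*w) - exp(-a*u)) * (exp(-c*w) - exp(-c*u))"
    and "c > 0 \<Longrightarrow> w \<noteq> u \<Longrightarrow> 0 < (exp(-a*w) - exp(-a*u)) * (exp(-c*w) - exp(-c*u))"
proof -
  show "0 \<le> (exp(-a*w) - exp(-a*u)) * (exp(-c*w) - exp(-c*u))"
  proof (cases "w \<le> u")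
    case True
    then have "exp(-a*u) \<le> exp(-a*w)" "exp(-c*u) \<le> exp(-c*w)" using assms by (auto intro: mult_left_mono)
    then show ?thesis by (intro mult_nonneg_nonneg) auto
  next
    case False
    then have "exp(-a*w) \<le> exp(-a*u)" "exp(-c*w) \<le> exp(-c*u)" using assms by (auto intro: mult_left_mono)
    then show ?thesis by (intro mult_nonpos_nonpos) auto
  qed
  assume c: "c > 0" and wv: "w \<noteq> u"
  show "0 < (exp(-a*w) - exp(-a*u)) * (exp(-c*w) - exp(-c*u))"
  proof (cases "w < u")
    case True
    then have "exp(-a*u) < exp(-a*w)" "exp(-c*u) < exp(-c*w)" using assms c by auto
    then show ?thesis by (intro mult_pos_pos) auto
  next
    case False
    then have "w > u" using wv by auto
    then have "exp(-a*w) < exp(-a*u)" "exp(-c*w) < exp(-c*u)" using assms c by auto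
    then show ?thesis by (intro mult_neg_neg) auto
  qed
qed

lemma sp_opp:
  fixes a c w u :: real
  assumes "a > 0" "c \<ge> 0"
  shows "(exp(a*w) - exp(a*u)) * (exp(-c*w) - exp(-c*u)) \<le> 0"
    and "c > 0 \<Longrightarrow> w \<noteq> u \<Longrightarrow> (exp(a*w) - exp(a*u)) * (exp(-c*w) - exp(-c*u)) < 0"
proof -
  show "(exp(a*w) - exp(a*u)) * (exp(-c*w) - exp(-c*u)) \<le> 0"
  proof (cases "w \<le> u")
    case True
    then have "exp(a*w) \<le> exp(a*u)" "exp(-c*u) \<le> exp(-c*w)" using assms by (auto intro: mult_left_mono)
    then show ?thesis by (intro mult_nonpos_nonneg) auto
  next
    case False
    then have "exp(a*u) \<le> exp(a*w)" "exp(-c*w) \<le> exp(-c*u)" using assms by (auto intro: mult_left_mono)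
    then show ?thesis by (intro mult_nonneg_nonpos) auto
  qed
  assume c: "c > 0" and wv: "w \<noteq> u"
  show "(exp(a*w) - exp(a*u)) * (exp(-c*w) - exp(-c*u)) < 0"
  proof (cases "w < u")
    case True
    then have "exp(a*w) < exp(a*u)" "exp(-c*u) < exp(-c*w)" using assms c by auto
    then show ?thesis by (intro mult_neg_pos) auto
  next
    case False
    then have "w > u" using wv by auto
    then have "exp(a*u) < exp(a*w)" "exp(-c*w) < exp(-c*u)" using assms c by auto
    then show ?thesis by (intro mult_pos_neg) auto
  qed
qed


lemma GH_main:
  fixes m c :: real
  assumes m: "m \<noteq> 0" and c: "c \<ge> 0"
  shows "0 \<le> m * (Gf m c * Hf m 0 - Gf m 0 * Hf m c)"
    and "c > 0 \<Longrightarrow> 0 < m * (Gf m c * Hf m 0 - Gf m 0 * Hf m c)"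
proof -
  define p where "p = (\<lambda>w. indicator {0<..} w * normal_density m 1 w)"
  define f where "f = (\<lambda>w::real. exp (-2*m*w))"
  define l where "l = (\<lambda>w::real. exp (-c*w))"
  define K where "K = exp (c*m - c^2/2)"
  have Kpos: "K > 0" unfolding K_def by simp
  have p_nn: "\<And>w. 0 \<le> p w" unfolding p_def by simp
  have ip: "integrable lborel p" using int_H[of m 0] unfolding p_def by simp
  have ifp: "integrable lborel (\<lambda>w. f w * p w)"
  proof -
    have "(\<lambda>w. f w * p w) = (\<lambda>w. indicator {0<..} w * exp (-2*m*w) * normal_density m 1 (w + 0))"
      by (auto simp: f_def p_def)
    then show ?thesis using int_G[of 0 m] by simp
  qed
  have l1: "\<And>w. w > 0 \<Longrightarrow> l w \<le> 1" unfolding l_def using c by simp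
  have l0: "\<And>w. 0 \<le> l w" unfolding l_def by simp
  have ilp: "integrable lborel (\<lambda>w. l w * p w)"
  proof (rule Bochner_Integration.integrable_bound[OF ip])
    show "(\<lambda>w. l w * p w) \<in> borel_measurable lborel" unfolding l_def p_def by measurable
    show "AE w in lborel. norm (l w * p w) \<le> norm (p w)"
    proof (rule AE_I2)
      fix w :: real
      show "norm (l w * p w) \<le> norm (p w)"
      proof (cases "w > 0")
        case True then show ?thesis using l1[OF True] l0[of w] p_nn[of w]
          by (simp add: abs_mult mult_left_le_one_le)
      qed (simp add: p_def)
    qed
  qed
  have iflp: "integrable lborel (\<lambda>w. f w * l w * p w)"
  proof (rule Bochner_Integration.integrable_bound[OF ifp])
    show "(\<lambda>w. f w * l w * p w) \<in> borel_measurable lborel" unfolding f_def l_def p_def by measurable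
    show "AE w in lborel. norm (f w * l w * p w) \<le> norm (f w * p w)"
    proof (rule AE_I2)
      fix w :: real
      show "norm (f w * l w * p w) \<le> norm (f w * p w)"
      proof (cases "w > 0")
        case True
        have "f w * p w \<ge> 0" unfolding f_def using p_nn[of w] by simp
        then show ?thesis using l1[OF True] l0[of w]
          by (simp add: abs_mult mult_left_le_one_le mult.commute mult.left_commute)
      qed (simp add: p_def)
    qed
  qed
  have Hf0: "Hf m 0 = integral\<^sup>L lborel p" unfolding Hf_def p_def by simp
  have Gf0: "Gf m 0 = integral\<^sup>L lborel (\<lambda>w. f w * p w)" unfolding Gf_def p_def f_def
    by (simp add: mult_ac)
  have HfC: "Hf m c = K * integral\<^sup>L lborel (\<lambda>w. l w * p w)"
  proof -
    have "(\<lambda>w. indicator {0<..} w * normal_density m 1 (w + c)) = (\<lambda>w. K * (l w * p w))"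
      by (auto simp: nd_shift K_def l_def p_def)
    then show ?thesis unfolding Hf_def by simp
  qed
  have GfC: "Gf m c = K * integral\<^sup>L lborel (\<lambda>w. f w * l w * p w)"
  proof -
    have "(\<lambda>w. indicator {0<..} w * exp (-2*m*w) * normal_density m 1 (w + c)) = (\<lambda>w. K * (f w * l w * p w))"
      by (auto simp: nd_shift K_def l_def p_def f_def)
    then show ?thesis unfolding Gf_def by simp
  qed
  have Ip: "0 < integral\<^sup>L lborel p"
    by (rule pos_int[OF ip p_nn, of 0]) (simp add: p_def normal_density_pos)
  have Ifp: "0 < integral\<^sup>L lborel (\<lambda>w. f w * p w)"
    by (rule pos_int[OF ifp, of 0]) (auto simp: p_def f_def normal_density_pos)
  define w0 where "w0 = - ln (integral\<^sup>L lborel (\<lambda>w. f w * p w) / integral\<^sup>L lborel p) / (2*m)"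
  have fw0: "f w0 * integral\<^sup>L lborel p = integral\<^sup>L lborel (\<lambda>w. f w * p w)"
  proof -
    have "-2*m*w0 = ln (integral\<^sup>L lborel (\<lambda>w. f w * p w) / integral\<^sup>L lborel p)"
      unfolding w0_def using m by (simp add: field_simps)
    then have "f w0 = exp (ln (integral\<^sup>L lborel (\<lambda>w. f w * p w) / integral\<^sup>L lborel p))"
      by (simp add: f_def)
    moreover have "0 < integral\<^sup>L lborel (\<lambda>w. f w * p w) / integral\<^sup>L lborel p" using Ip Ifp by simp
    ultimately have "f w0 = integral\<^sup>L lborel (\<lambda>w. f w * p w) / integral\<^sup>L lborel p"
      by simp
    then show ?thesis using Ip by simp
  qed
  let ?T = "\<lambda>w. (f w - f w0) * (l w - l w0) * p w"
  have key: "integral\<^sup>L lborel p * integral\<^sup>L lborel ?T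
     = integral\<^sup>L lborel (\<lambda>w. f w * l w * p w) * integral\<^sup>L lborel p
       - integral\<^sup>L lborel (\<lambda>w. f w * p w) * integral\<^sup>L lborel (\<lambda>w. l w * p w)"
    by (rule cheb_id[OF ip ifp ilp iflp fw0])
  have iT: "integrable lborel ?T" by (rule cheb_int[OF ip ifp ilp iflp])
  have main: "m * (Gf m c * Hf m 0 - Gf m 0 * Hf m c) = (m * K) * (integral\<^sup>L lborel p * integral\<^sup>L lborel ?T)"
    unfolding key GfC HfC Gf0 Hf0 by (simp add: algebra_simps)
  have signT: "\<And>w. 0 \<le> m * ((f w - f w0) * (l w - l w0))"
    and signT': "\<And>w. c > 0 \<Longrightarrow> w \<noteq> w0 \<Longrightarrow> 0 < m * ((f w - f w0) * (l w - l w0))"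
  proof -
    fix w
    show "0 \<le> m * ((f w - f w0) * (l w - l w0))"
    proof (cases "m > 0")
      case True
      from sp_same(1)[of "2*m" c w w0] True c show ?thesis unfolding f_def l_def
        by (simp add: zero_le_mult_iff)
    next
      case False
      then have "m < 0" using m by simp
      with sp_opp(1)[of "-2*m" c w w0] c show ?thesis unfolding f_def l_def
        by (simp add: zero_le_mult_iff mult_le_0_iff)
    qed
    assume "c > 0" "w \<noteq> w0"
    show "0 < m * ((f w - f w0) * (l w - l w0))"
    proof (cases "m > 0")
      case True
      from sp_same(2)[of "2*m" c w w0] True \<open>c > 0\<close> \<open>w \<noteq> w0\<close> show ?thesis unfolding f_def l_def
        by (simp add: zero_less_mult_iff)
    next
      case False
      then have "m < 0" using m by simp
      with sp_opp(2)[of "-2*m" c w w0] \<open>c > 0\<close> \<open>w \<noteq> w0\<close> show ?thesis unfolding f_def l_def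
        by (simp add: zero_less_mult_iff mult_less_0_iff)
    qed
  qed
  have mT: "m * integral\<^sup>L lborel ?T = integral\<^sup>L lborel (\<lambda>w. m * ?T w)" by simp
  have imT: "integrable lborel (\<lambda>w. m * ?T w)" using iT by simp
  have mT_nn: "\<And>w. 0 \<le> m * ?T w"
    using signT p_nn by (metis (no_types, lifting) mult.assoc mult_nonneg_nonneg)
  have "0 \<le> integral\<^sup>L lborel (\<lambda>w. m * ?T w)"
    by (rule integral_nonneg_AE, rule AE_I2, rule mT_nn)
  then have T0: "0 \<le> m * integral\<^sup>L lborel ?T" using mT by linarith
  have eqq: "(m * K) * (integral\<^sup>L lborel p * integral\<^sup>L lborel ?T) = (K * integral\<^sup>L lborel p) * (m * integral\<^sup>L lborel ?T)"
    by (simp add: mult_ac)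
  show "0 \<le> m * (Gf m c * Hf m 0 - Gf m 0 * Hf m c)"
    unfolding main eqq by (rule mult_nonneg_nonneg[OF _ T0]) (use Kpos Ip in simp)
  assume "c > 0"
  have "0 < integral\<^sup>L lborel (\<lambda>w. m * ?T w)"
  proof (rule pos_int[OF imT mT_nn, of w0])
    fix w :: real assume "0 < w" "w \<noteq> w0"
    then have "0 < m * ((f w - f w0) * (l w - l w0))" "0 < p w"
      using signT' \<open>c > 0\<close> by (auto simp: p_def normal_density_pos)
    then show "0 < m * ?T w" by (metis mult.assoc mult_pos_pos)
  qed
  then have T1: "0 < m * integral\<^sup>L lborel ?T" using mT by linarith
  show "0 < m * (Gf m c * Hf m 0 - Gf m 0 * Hf m c)"
    unfolding main eqq by (rule mult_pos_pos[OF _ T1]) (use Kpos Ip in simp)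
qed


lemma GH_simple:
  fixes m c :: real
  assumes c: "c \<ge> 0"
  shows "m > 0 \<Longrightarrow> Gf m c < Hf m c" and "m < 0 \<Longrightarrow> Hf m c < Gf m c"
proof -
  have d: "Hf m c - Gf m c = (\<integral>w. indicator {0<..} w * normal_density m 1 (w + c)
      - indicator {0<..} w * exp (-2*m*w) * normal_density m 1 (w + c) \<partial>lborel)"
    unfolding Hf_def Gf_def by (rule Bochner_Integration.integral_diff[symmetric, OF int_H int_G[OF c]])
  have i: "integrable lborel (\<lambda>w. indicator {0<..} w * normal_density m 1 (w + c)
      - indicator {0<..} w * exp (-2*m*w) * normal_density m 1 (w + c))"
    by (rule Bochner_Integration.integrable_diff[OF int_H int_G[OF c]])
  have e: "\<And>w. indicator {0<..} w * normal_density m 1 (w + c)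
      - indicator {0<..} w * exp (-2*m*w) * normal_density m 1 (w + c)
      = indicator {0<..} w * ((1 - exp (-2*m*w)) * normal_density m 1 (w + c))"
    by (simp add: algebra_simps)
  show "m > 0 \<Longrightarrow> Gf m c < Hf m c"
  proof -
    assume m: "m > 0"
    have "0 < Hf m c - Gf m c" unfolding d
    proof (rule pos_int[OF i, of 0])
      fix w :: real
      show "0 \<le> indicator {0<..} w * normal_density m 1 (w + c)
         - indicator {0<..} w * exp (-2*m*w) * normal_density m 1 (w + c)"
        unfolding e using m by (cases "0 < w") (auto intro!: mult_nonneg_nonneg)
      assume "0 < w"
      then show "0 < indicator {0<..} w * normal_density m 1 (w + c)
         - indicator {0<..} w * exp (-2*m*w) * normal_density m 1 (w + c)"
        unfolding e using m by (auto intro!: mult_pos_pos normal_density_pos)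
    qed
    then show ?thesis by simp
  qed
  show "m < 0 \<Longrightarrow> Hf m c < Gf m c"
  proof -
    assume m: "m < 0"
    have i2: "integrable lborel (\<lambda>w. - (indicator {0<..} w * normal_density m 1 (w + c)
      - indicator {0<..} w * exp (-2*m*w) * normal_density m 1 (w + c)))"
      by (rule integrable_minus[OF i])
    have "0 < (\<integral>w. - (indicator {0<..} w * normal_density m 1 (w + c)
      - indicator {0<..} w * exp (-2*m*w) * normal_density m 1 (w + c)) \<partial>lborel)"
    proof (rule pos_int[OF i2, of 0])
      fix w :: real
      have "1 - exp (-2*m*w) \<le> 0" if "0 < w"
      proof -
        have "m * w < 0" using m that by (rule mult_neg_pos)
        then show ?thesis by simp
      qed
      then show "0 \<le> - (indicator {0<..} w * normal_density m 1 (w + c)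
         - indicator {0<..} w * exp (-2*m*w) * normal_density m 1 (w + c))"
        unfolding e by (cases "0 < w") (auto intro!: mult_nonpos_nonneg)
      assume "0 < w"
      then have "m * w < 0" using m by (simp add: mult_neg_pos)
      then have "1 - exp (-2*m*w) < 0" by simp
      then show "0 < - (indicator {0<..} w * normal_density m 1 (w + c)
         - indicator {0<..} w * exp (-2*m*w) * normal_density m 1 (w + c))"
        unfolding e using \<open>0 < w\<close> by (auto intro!: mult_neg_pos normal_density_pos)
    qed
    then have "0 < - (Hf m c - Gf m c)" unfolding d by (simp only: Bochner_Integration.integral_minus)
    then show ?thesis by simp
  qed
qed

lemma H_pos: "0 < Hf m c"
  unfolding Hf_def by (rule pos_int[where z=0]) (auto intro!: normal_density_pos int_H)

lemma G_pos: assumes "c \<ge> 0" shows "0 < Gf m c"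
  unfolding Gf_def by (rule pos_int[where z=0, OF int_G[OF assms]]) (auto intro!: normal_density_pos mult_pos_pos)


lemma Phi_int: "Phi a = (\<integral>u. indicator {..a} u * normal_density 0 1 u \<partial>lborel)"
proof -
  have i: "integrable lborel (\<lambda>u. indicator {..a} u * normal_density 0 1 u)"
    by (subst mult.commute, intro integrable_real_mult_indicator) auto
  have "emeasure (density lborel (\<lambda>x. ennreal (normal_density 0 1 x))) {..a}
      = (\<integral>\<^sup>+ x. ennreal (normal_density 0 1 x) * indicator {..a} x \<partial>lborel)"
    by (rule emeasure_density) auto
  also have "\<dots> = (\<integral>\<^sup>+ x. ennreal (indicator {..a} x * normal_density 0 1 x) \<partial>lborel)"
    by (rule nn_integral_cong) (auto simp: indicator_def)
  also have "\<dots> = ennreal (\<integral>u. indicator {..a} u * normal_density 0 1 u \<partial>lborel)"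
    by (rule nn_integral_eq_integral[OF i]) auto
  finally show ?thesis unfolding Phi_def cdf_def measure_def
    by (simp add: integral_nonneg_AE)
qed

lemma Phi_lt: "Phi a = (\<integral>u. indicator {..<a} u * normal_density 0 1 u \<partial>lborel)"
  unfolding Phi_int
proof (rule integral_cong_AE)
  show "AE x in lborel. indicator {..a} x * normal_density 0 1 x = indicator {..<a} x * normal_density 0 1 x"
    using AE_lborel_singleton[of a] by eventually_elim (auto simp: indicator_def)
qed auto

lemma Hf0_Phi: "Hf m 0 = Phi m"
proof -
  have "Hf m 0 = \<bar>-1\<bar> *\<^sub>R (\<integral>x. indicator {0<..} (m + -1*x) * normal_density m 1 ((m + -1*x) + 0) \<partial>lborel)"
    unfolding Hf_def by (rule lborel_integral_real_affine) simp
  also have fe: "(\<lambda>x. indicator {0<..} (m + -1*x) * normal_density m 1 ((m + -1*x) + 0)) = (\<lambda>x. indicator {..<m} x * normal_density 0 1 x)"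
    by (rule ext) (simp add: indicator_def normal_density_def)
  have "\<bar>-1\<bar> *\<^sub>R (\<integral>x. indicator {0<..} (m + -1*x) * normal_density m 1 ((m + -1*x) + 0) \<partial>lborel) = (\<integral>x. indicator {..<m} x * normal_density 0 1 x \<partial>lborel)"
    unfolding fe by simp
  finally show ?thesis unfolding Phi_lt .
qed

lemma Gf0_Phi: "Gf m 0 = Phi (-m)"
proof -
  have "Gf m 0 = Hf (-m) 0"
    unfolding Gf_def Hf_def
    by (rule arg_cong[where f="integral\<^sup>L lborel"], rule ext) (simp only: add_0_right, subst nd_tilt[symmetric], simp only: mult.assoc)
  then show ?thesis by (simp add: Hf0_Phi)
qed

lemma Phi_sym: "Phi (-a) = 1 - Phi a"
proof -
  have i1: "integrable lborel (\<lambda>u. indicator {..a} u * normal_density 0 1 u)"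
    by (subst mult.commute, intro integrable_real_mult_indicator) auto
  have i2: "integrable lborel (\<lambda>u. indicator {a..} u * normal_density 0 1 u)"
    by (subst mult.commute, intro integrable_real_mult_indicator) auto
  have "Phi (-a) = \<bar>-1\<bar> *\<^sub>R (\<integral>x. indicator {..-a} (0 + -1*x) * normal_density 0 1 (0 + -1*x) \<partial>lborel)"
    unfolding Phi_int by (rule lborel_integral_real_affine) simp
  also have fe: "(\<lambda>x. indicator {..-a} (0 + -1*x) * normal_density 0 1 (0 + -1*x)) = (\<lambda>x. indicator {a..} x * normal_density 0 1 x)"
    by (rule ext) (simp add: indicator_def normal_density_def)
  have "\<bar>-1\<bar> *\<^sub>R (\<integral>x. indicator {..-a} (0 + -1*x) * normal_density 0 1 (0 + -1*x) \<partial>lborel) = (\<integral>x. indicator {a..} x * normal_density 0 1 x \<partial>lborel)"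
    unfolding fe by simp
  finally have e: "Phi (-a) = (\<integral>x. indicator {a..} x * normal_density 0 1 x \<partial>lborel)" .
  have "Phi a + Phi (-a) = (\<integral>x. indicator {..a} x * normal_density 0 1 x \<partial>lborel) + (\<integral>x. indicator {a..} x * normal_density 0 1 x \<partial>lborel)"
    by (simp only: e Phi_int[of a])
  also have "\<dots> = (\<integral>x. indicator {..a} x * normal_density 0 1 x + indicator {a..} x * normal_density 0 1 x \<partial>lborel)"
    by (rule Bochner_Integration.integral_add[symmetric, OF i1 i2])
  also have "\<dots> = (\<integral>x. normal_density 0 1 x \<partial>lborel)"
  proof (rule integral_cong_AE)
    show "AE x in lborel. indicator {..a} x * normal_density 0 1 x + indicator {a..} x * normal_density 0 1 x = normal_density 0 1 x"
      using AE_lborel_singleton[of a] by eventually_elim (auto simp: indicator_def)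
  qed auto
  also have "\<dots> = 1" by simp
  finally show ?thesis by simp
qed

lemma R_GH: "Rratio (-m) = Gf m 0 / Hf m 0"
  unfolding Rratio_def Gf0_Phi Hf0_Phi using Phi_sym[of m] by simp


lemma nnU:
  fixes m s b :: real
  assumes sb: "s \<le> b"
  shows "(\<integral>\<^sup>+ y. (if b < s + y then ennreal (exp (-2*m*(s+y))) else 0) \<partial>density lborel (\<lambda>x. ennreal (normal_density m 1 x)))
     = ennreal (exp (-2*m*b) * Gf m (b - s))"
proof -
  let ?F = "\<lambda>y. ennreal (indicator {b-s<..} y * exp (-2*m*(s+y)) * normal_density m 1 y)"
  have "(\<integral>\<^sup>+ y. (if b < s + y then ennreal (exp (-2*m*(s+y))) else 0) \<partial>density lborel (\<lambda>x. ennreal (normal_density m 1 x)))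
      = (\<integral>\<^sup>+ y. ennreal (normal_density m 1 y) * (if b < s + y then ennreal (exp (-2*m*(s+y))) else 0) \<partial>lborel)"
    by (rule nn_integral_density) auto
  also have "\<dots> = (\<integral>\<^sup>+ y. ?F y \<partial>lborel)"
    by (rule nn_integral_cong) (auto simp: indicator_def ennreal_mult'' mult.commute)
  also have "\<dots> = ennreal \<bar>1::real\<bar> * (\<integral>\<^sup>+ w. ?F ((b - s) + 1 * w) \<partial>lborel)"
    by (rule nn_integral_real_affine) auto
  also have "\<dots> = (\<integral>\<^sup>+ w. ennreal (exp (-2*m*b) * (indicator {0<..} w * exp (-2*m*w) * normal_density m 1 (w + (b - s)))) \<partial>lborel)"
  proof -
    have "\<And>w. exp (-2*m*(s+((b - s) + 1 * w))) = exp (-2*m*b) * exp (-2*m*w)"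
      by (simp add: algebra_simps flip: exp_add)
    then show ?thesis by (auto intro!: nn_integral_cong simp: indicator_def add.commute)
  qed
  also have "\<dots> = ennreal (\<integral>w. exp (-2*m*b) * (indicator {0<..} w * exp (-2*m*w) * normal_density m 1 (w + (b - s))) \<partial>lborel)"
  proof -
    have iG: "integrable lborel (\<lambda>w. exp (-2*m*b) * (indicator {0<..} w * exp (-2*m*w) * normal_density m 1 (w + (b - s))))"
      using int_G[of "b - s" m] sb by simp
    show ?thesis by (rule nn_integral_eq_integral[OF iG]) auto
  qed
  also have "\<dots> = ennreal (exp (-2*m*b) * Gf m (b - s))"
    unfolding Gf_def by simp
  finally show ?thesis .
qed

lemma nnPU:
  fixes m s b :: real
  shows "(\<integral>\<^sup>+ y. (if b < s + y then 1 else 0) \<partial>density lborel (\<lambda>x. ennreal (normal_density m 1 x)))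
     = ennreal (Hf m (b - s))"
proof -
  let ?F = "\<lambda>y. ennreal (indicator {b-s<..} y * normal_density m 1 y)"
  have "(\<integral>\<^sup>+ y. (if b < s + y then 1 else 0) \<partial>density lborel (\<lambda>x. ennreal (normal_density m 1 x)))
      = (\<integral>\<^sup>+ y. ennreal (normal_density m 1 y) * (if b < s + y then 1 else 0) \<partial>lborel)"
    by (rule nn_integral_density) auto
  also have "\<dots> = (\<integral>\<^sup>+ y. ?F y \<partial>lborel)"
    by (rule nn_integral_cong) (auto simp: indicator_def)
  also have "\<dots> = ennreal \<bar>1::real\<bar> * (\<integral>\<^sup>+ w. ?F ((b - s) + 1 * w) \<partial>lborel)"
    by (rule nn_integral_real_affine) auto
  also have "\<dots> = (\<integral>\<^sup>+ w. ennreal (indicator {0<..} w * normal_density m 1 (w + (b - s))) \<partial>lborel)"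
    by (auto intro!: nn_integral_cong simp: indicator_def add.commute)
  also have "\<dots> = ennreal (\<integral>w. indicator {0<..} w * normal_density m 1 (w + (b - s)) \<partial>lborel)"
    by (rule nn_integral_eq_integral) (auto intro!: int_H)
  also have "\<dots> = ennreal (Hf m (b - s))"
    unfolding Hf_def by simp
  finally show ?thesis .
qed

lemma nd_refl: "normal_density m 1 (-(b+s) + -1*w) = normal_density (-m) 1 (w + (b + s))"
  unfolding normal_density_def by (simp add: power2_eq_square algebra_simps)

lemma nd_refl2: "normal_density m 1 (- b - s - w) = normal_density (-m) 1 (w + (b + s))"
  unfolding normal_density_def by (simp add: power2_eq_square algebra_simps)

lemma nnL:
  fixes m s b :: real
  assumes sb: "-b \<le> s"
  shows "(\<integral>\<^sup>+ y. (if s + y < -b then ennreal (exp (-2*m*(s+y))) else 0) \<partial>density lborel (\<lambda>x. ennreal (normal_density m 1 x)))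
     = ennreal (exp (2*m*b) * Gf (-m) (b + s))"
proof -
  let ?F = "\<lambda>y. ennreal (indicator {..< -b-s} y * exp (-2*m*(s+y)) * normal_density m 1 y)"
  have "(\<integral>\<^sup>+ y. (if s + y < -b then ennreal (exp (-2*m*(s+y))) else 0) \<partial>density lborel (\<lambda>x. ennreal (normal_density m 1 x)))
      = (\<integral>\<^sup>+ y. ennreal (normal_density m 1 y) * (if s + y < -b then ennreal (exp (-2*m*(s+y))) else 0) \<partial>lborel)"
    by (rule nn_integral_density) auto
  also have "\<dots> = (\<integral>\<^sup>+ y. ?F y \<partial>lborel)"
    by (rule nn_integral_cong) (auto simp: indicator_def ennreal_mult'' mult.commute)
  also have "\<dots> = ennreal \<bar>-1::real\<bar> * (\<integral>\<^sup>+ w. ?F (-(b+s) + -1 * w) \<partial>lborel)"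
    by (rule nn_integral_real_affine) auto
  also have "\<dots> = (\<integral>\<^sup>+ w. ennreal (exp (2*m*b) * (indicator {0<..} w * exp (-2*(-m)*w) * normal_density (-m) 1 (w + (b + s)))) \<partial>lborel)"
  proof -
    have "\<And>w. exp (-2*m*(s+(-(b+s) + -1 * w))) = exp (2*m*b) * exp (-2*(-m)*w)"
      by (simp add: algebra_simps flip: exp_add)
    then show ?thesis by (auto intro!: nn_integral_cong simp: indicator_def nd_refl nd_refl2)
  qed
  also have "\<dots> = ennreal (\<integral>w. exp (2*m*b) * (indicator {0<..} w * exp (-2*(-m)*w) * normal_density (-m) 1 (w + (b + s))) \<partial>lborel)"
  proof -
    have iG: "integrable lborel (\<lambda>w. exp (2*m*b) * (indicator {0<..} w * exp (-2*(-m)*w) * normal_density (-m) 1 (w + (b + s))))"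
      using int_G[of "b + s" "-m"] sb by simp
    show ?thesis by (rule nn_integral_eq_integral[OF iG]) auto
  qed
  also have "\<dots> = ennreal (exp (2*m*b) * Gf (-m) (b + s))"
    unfolding Gf_def by simp
  finally show ?thesis .
qed

lemma nnPL:
  fixes m s b :: real
  shows "(\<integral>\<^sup>+ y. (if s + y < -b then 1 else 0) \<partial>density lborel (\<lambda>x. ennreal (normal_density m 1 x)))
     = ennreal (Hf (-m) (b + s))"
proof -
  let ?F = "\<lambda>y. ennreal (indicator {..< -b-s} y * normal_density m 1 y)"
  have "(\<integral>\<^sup>+ y. (if s + y < -b then 1 else 0) \<partial>density lborel (\<lambda>x. ennreal (normal_density m 1 x)))
      = (\<integral>\<^sup>+ y. ennreal (normal_density m 1 y) * (if s + y < -b then 1 else 0) \<partial>lborel)"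
    by (rule nn_integral_density) auto
  also have "\<dots> = (\<integral>\<^sup>+ y. ?F y \<partial>lborel)"
    by (rule nn_integral_cong) (auto simp: indicator_def)
  also have "\<dots> = ennreal \<bar>-1::real\<bar> * (\<integral>\<^sup>+ w. ?F (-(b+s) + -1 * w) \<partial>lborel)"
    by (rule nn_integral_real_affine) auto
  also have "\<dots> = (\<integral>\<^sup>+ w. ennreal (indicator {0<..} w * normal_density (-m) 1 (w + (b + s))) \<partial>lborel)"
    by (auto intro!: nn_integral_cong simp: indicator_def nd_refl nd_refl2)
  also have "\<dots> = ennreal (\<integral>w. indicator {0<..} w * normal_density (-m) 1 (w + (b + s)) \<partial>lborel)"
    by (rule nn_integral_eq_integral) (auto intro!: int_H)
  also have "\<dots> = ennreal (Hf (-m) (b + s))"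
    unfolding Hf_def by simp
  finally show ?thesis .
qed


abbreviation NN :: "real \<Rightarrow> real measure" where
  "NN m \<equiv> density lborel (\<lambda>x. ennreal (normal_density m 1 x))"

lemma ratio_bound:
  fixes e G0 H0 Gc Hc :: real
  assumes e: "e > 0" and H0: "H0 > 0"
  shows "G0 * Hc \<le> Gc * H0 \<Longrightarrow> G0 / H0 * e * Hc \<le> e * Gc"
    and "G0 * Hc < Gc * H0 \<Longrightarrow> G0 / H0 * e * Hc < e * Gc"
    and "Gc * H0 \<le> G0 * Hc \<Longrightarrow> e * Gc \<le> e * (G0 / H0) * Hc"
    and "Gc * H0 < G0 * Hc \<Longrightarrow> e * Gc < e * (G0 / H0) * Hc"
proof -
  have eq1: "G0 / H0 * e * Hc = e * (G0 * Hc) / H0" by simp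
  have eq2: "e * (G0 / H0) * Hc = e * (G0 * Hc) / H0" by simp
  have eq3: "e * Gc = e * (Gc * H0) / H0" using H0 by simp
  show "G0 * Hc \<le> Gc * H0 \<Longrightarrow> G0 / H0 * e * Hc \<le> e * Gc"
    unfolding eq1 by (subst eq3, intro divide_right_mono mult_left_mono) (use e H0 in auto)
  show "G0 * Hc < Gc * H0 \<Longrightarrow> G0 / H0 * e * Hc < e * Gc"
    unfolding eq1 by (subst eq3, intro divide_strict_right_mono mult_strict_left_mono) (use e H0 in auto)
  show "Gc * H0 \<le> G0 * Hc \<Longrightarrow> e * Gc \<le> e * (G0 / H0) * Hc"
    unfolding eq2 by (subst eq3, intro divide_right_mono mult_left_mono) (use e H0 in auto)
  show "Gc * H0 < G0 * Hc \<Longrightarrow> e * Gc < e * (G0 / H0) * Hc"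
    unfolding eq2 by (subst eq3, intro divide_strict_right_mono mult_strict_left_mono) (use e H0 in auto)
qed

lemma R_pos: "0 < Rratio (-m)"
  unfolding R_GH using G_pos[of 0 m] H_pos[of m 0] by simp

lemma U_lower:
  fixes \<mu> b s :: real
  assumes mu: "\<mu> > 0" and sb: "s \<le> b"
  shows "ennreal (Rratio (-\<mu>) * exp (-2*\<mu>*b)) * (\<integral>\<^sup>+ y. (if b < s + y then 1 else 0) \<partial>NN \<mu>)
      \<le> (\<integral>\<^sup>+ y. (if b < s + y then ennreal (exp (-2*\<mu>*(s+y))) else 0) \<partial>NN \<mu>)"
    and "s < b \<Longrightarrow> ennreal (Rratio (-\<mu>) * exp (-2*\<mu>*b)) * (\<integral>\<^sup>+ y. (if b < s + y then 1 else 0) \<partial>NN \<mu>)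
      < (\<integral>\<^sup>+ y. (if b < s + y then ennreal (exp (-2*\<mu>*(s+y))) else 0) \<partial>NN \<mu>)"
proof -
  have c: "0 \<le> b - s" using sb by simp
  have R0: "0 \<le> Rratio (-\<mu>) * exp (-2*\<mu>*b)" using R_pos[of \<mu>] by simp
  have H0: "Hf \<mu> 0 > 0" by (rule H_pos)
  have eq: "ennreal (Rratio (-\<mu>) * exp (-2*\<mu>*b)) * (\<integral>\<^sup>+ y. (if b < s + y then 1 else 0) \<partial>NN \<mu>)
      = ennreal (Gf \<mu> 0 / Hf \<mu> 0 * exp (-2*\<mu>*b) * Hf \<mu> (b - s))"
    unfolding nnPU R_GH using R0 H_pos[of \<mu> "b - s"] unfolding R_GH by (simp add: ennreal_mult''[symmetric])
  have m1: "0 \<le> \<mu> * (Gf \<mu> (b - s) * Hf \<mu> 0 - Gf \<mu> 0 * Hf \<mu> (b - s))" by (rule GH_main(1)) (use mu c in auto)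
  then have "Gf \<mu> 0 * Hf \<mu> (b - s) \<le> Gf \<mu> (b - s) * Hf \<mu> 0" using mu by (simp add: zero_le_mult_iff)
  then have "Gf \<mu> 0 / Hf \<mu> 0 * exp (-2*\<mu>*b) * Hf \<mu> (b - s) \<le> exp (-2*\<mu>*b) * Gf \<mu> (b - s)"
    by (rule ratio_bound(1)[OF exp_gt_zero H0])
  then show "ennreal (Rratio (-\<mu>) * exp (-2*\<mu>*b)) * (\<integral>\<^sup>+ y. (if b < s + y then 1 else 0) \<partial>NN \<mu>)
      \<le> (\<integral>\<^sup>+ y. (if b < s + y then ennreal (exp (-2*\<mu>*(s+y))) else 0) \<partial>NN \<mu>)"
    unfolding eq nnU[OF sb] by (rule ennreal_leI)
  assume "s < b"
  then have m2: "0 < \<mu> * (Gf \<mu> (b - s) * Hf \<mu> 0 - Gf \<mu> 0 * Hf \<mu> (b - s))" by (intro GH_main(2)) (use mu c in auto)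
  then have "Gf \<mu> 0 * Hf \<mu> (b - s) < Gf \<mu> (b - s) * Hf \<mu> 0" using mu by (simp add: zero_less_mult_iff)
  then have "Gf \<mu> 0 / Hf \<mu> 0 * exp (-2*\<mu>*b) * Hf \<mu> (b - s) < exp (-2*\<mu>*b) * Gf \<mu> (b - s)"
    by (rule ratio_bound(2)[OF exp_gt_zero H0])
  then show "ennreal (Rratio (-\<mu>) * exp (-2*\<mu>*b)) * (\<integral>\<^sup>+ y. (if b < s + y then 1 else 0) \<partial>NN \<mu>)
      < (\<integral>\<^sup>+ y. (if b < s + y then ennreal (exp (-2*\<mu>*(s+y))) else 0) \<partial>NN \<mu>)"
  proof -
    have "0 \<le> Gf \<mu> 0 / Hf \<mu> 0 * exp (-2*\<mu>*b) * Hf \<mu> (b - s)"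
      using G_pos[of 0 \<mu>] H_pos[of \<mu> 0] H_pos[of \<mu> "b - s"]
      by (intro mult_nonneg_nonneg divide_nonneg_nonneg) auto
    then show ?thesis using \<open>Gf \<mu> 0 / Hf \<mu> 0 * exp (-2*\<mu>*b) * Hf \<mu> (b - s) < exp (-2*\<mu>*b) * Gf \<mu> (b - s)\<close>
      unfolding eq nnU[OF sb] by (subst ennreal_less_iff) auto
  qed
qed

lemma U_upper:
  fixes \<mu> b s :: real
  assumes mu: "\<mu> > 0" and sb: "s \<le> b"
  shows "(\<integral>\<^sup>+ y. (if b < s + y then ennreal (exp (-2*\<mu>*(s+y))) else 0) \<partial>NN \<mu>)
      < ennreal (exp (-2*\<mu>*b)) * (\<integral>\<^sup>+ y. (if b < s + y then 1 else 0) \<partial>NN \<mu>)"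
proof -
  have c: "0 \<le> b - s" using sb by simp
  have "Gf \<mu> (b - s) < Hf \<mu> (b - s)" by (rule GH_simple(1)[OF c mu])
  then have "exp (-2*\<mu>*b) * Gf \<mu> (b - s) < exp (-2*\<mu>*b) * Hf \<mu> (b - s)" by simp
  then show ?thesis unfolding nnU[OF sb] nnPU using G_pos[OF c, of \<mu>]
    by (simp add: ennreal_mult''[symmetric] ennreal_less_iff)
qed

lemma L_lower:
  fixes \<mu> b s :: real
  assumes mu: "\<mu> > 0" and sb: "-b \<le> s"
  shows "ennreal (exp (2*\<mu>*b)) * (\<integral>\<^sup>+ y. (if s + y < -b then 1 else 0) \<partial>NN \<mu>)
      < (\<integral>\<^sup>+ y. (if s + y < -b then ennreal (exp (-2*\<mu>*(s+y))) else 0) \<partial>NN \<mu>)"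
proof -
  have c: "0 \<le> b + s" using sb by simp
  have "Hf (-\<mu>) (b + s) < Gf (-\<mu>) (b + s)" by (rule GH_simple(2)[OF c]) (use mu in simp)
  then have "exp (2*\<mu>*b) * Hf (-\<mu>) (b + s) < exp (2*\<mu>*b) * Gf (-\<mu>) (b + s)" by simp
  then show ?thesis unfolding nnL[OF sb] nnPL using H_pos[of "-\<mu>" "b + s"]
    by (simp add: ennreal_mult''[symmetric] ennreal_less_iff)
qed

lemma L_upper:
  fixes \<mu> b s :: real
  assumes mu: "\<mu> > 0" and sb: "-b \<le> s"
  shows "(\<integral>\<^sup>+ y. (if s + y < -b then ennreal (exp (-2*\<mu>*(s+y))) else 0) \<partial>NN \<mu>)
      \<le> ennreal (exp (2*\<mu>*b) * Rratio \<mu>) * (\<integral>\<^sup>+ y. (if s + y < -b then 1 else 0) \<partial>NN \<mu>)"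
    and "-b < s \<Longrightarrow> (\<integral>\<^sup>+ y. (if s + y < -b then ennreal (exp (-2*\<mu>*(s+y))) else 0) \<partial>NN \<mu>)
      < ennreal (exp (2*\<mu>*b) * Rratio \<mu>) * (\<integral>\<^sup>+ y. (if s + y < -b then 1 else 0) \<partial>NN \<mu>)"
proof -
  have c: "0 \<le> b + s" using sb by simp
  have Rm: "Rratio \<mu> = Gf (-\<mu>) 0 / Hf (-\<mu>) 0" using R_GH[of "-\<mu>"] by simp
  have R0: "0 \<le> exp (2*\<mu>*b) * Rratio \<mu>" using R_pos[of "-\<mu>"] by simp
  have H0: "Hf (-\<mu>) 0 > 0" by (rule H_pos)
  have eq: "ennreal (exp (2*\<mu>*b) * Rratio \<mu>) * (\<integral>\<^sup>+ y. (if s + y < -b then 1 else 0) \<partial>NN \<mu>)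
      = ennreal (exp (2*\<mu>*b) * (Gf (-\<mu>) 0 / Hf (-\<mu>) 0) * Hf (-\<mu>) (b + s))"
    unfolding nnPL using R0 H_pos[of "-\<mu>" "b + s"] unfolding Rm by (simp add: ennreal_mult''[symmetric])
  have m1: "0 \<le> (-\<mu>) * (Gf (-\<mu>) (b + s) * Hf (-\<mu>) 0 - Gf (-\<mu>) 0 * Hf (-\<mu>) (b + s))"
    by (rule GH_main(1)) (use mu c in auto)
  then have "Gf (-\<mu>) (b + s) * Hf (-\<mu>) 0 \<le> Gf (-\<mu>) 0 * Hf (-\<mu>) (b + s)" using mu
    by (simp add: zero_le_mult_iff mult_le_0_iff)
  then have "exp (2*\<mu>*b) * Gf (-\<mu>) (b + s) \<le> exp (2*\<mu>*b) * (Gf (-\<mu>) 0 / Hf (-\<mu>) 0) * Hf (-\<mu>) (b + s)"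
    by (rule ratio_bound(3)[OF exp_gt_zero H0])
  then show "(\<integral>\<^sup>+ y. (if s + y < -b then ennreal (exp (-2*\<mu>*(s+y))) else 0) \<partial>NN \<mu>)
      \<le> ennreal (exp (2*\<mu>*b) * Rratio \<mu>) * (\<integral>\<^sup>+ y. (if s + y < -b then 1 else 0) \<partial>NN \<mu>)"
    unfolding eq nnL[OF sb] by (rule ennreal_leI)
  assume "-b < s"
  then have m2: "0 < (-\<mu>) * (Gf (-\<mu>) (b + s) * Hf (-\<mu>) 0 - Gf (-\<mu>) 0 * Hf (-\<mu>) (b + s))"
    by (intro GH_main(2)) (use mu c in auto)
  then have "Gf (-\<mu>) (b + s) * Hf (-\<mu>) 0 < Gf (-\<mu>) 0 * Hf (-\<mu>) (b + s)" using mu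
    by (simp add: zero_less_mult_iff mult_less_0_iff)
  then have "exp (2*\<mu>*b) * Gf (-\<mu>) (b + s) < exp (2*\<mu>*b) * (Gf (-\<mu>) 0 / Hf (-\<mu>) 0) * Hf (-\<mu>) (b + s)"
    by (rule ratio_bound(4)[OF exp_gt_zero H0])
  then show "(\<integral>\<^sup>+ y. (if s + y < -b then ennreal (exp (-2*\<mu>*(s+y))) else 0) \<partial>NN \<mu>)
      < ennreal (exp (2*\<mu>*b) * Rratio \<mu>) * (\<integral>\<^sup>+ y. (if s + y < -b then 1 else 0) \<partial>NN \<mu>)"
    unfolding eq nnL[OF sb] using R0 H_pos[of "-\<mu>" "b + s"] G_pos[of 0 "-\<mu>"] H0 G_pos[OF c, of "-\<mu>"]
    by (subst ennreal_less_iff) (auto simp: Rm[symmetric])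
qed



lemma suminf_strict_ennreal:
  fixes f g :: "nat \<Rightarrow> ennreal"
  assumes le: "\<And>n. f n \<le> g n" and lt: "f k < g k" and fin: "suminf f < \<infinity>"
  shows "suminf f < suminf g"
proof -
  have "suminf g = (\<Sum>n. f n + (g n - f n))"
    using le by (simp add: add_diff_inverse_ennreal)
  also have "\<dots> = suminf f + (\<Sum>n. g n - f n)"
    by (rule suminf_add[symmetric]) auto
  finally have eq: "suminf g = suminf f + (\<Sum>n. g n - f n)" .
  have "g k - f k \<le> (\<Sum>n. g n - f n)"
    using sum_le_suminf[of "\<lambda>n. g n - f n" "{k}"] by auto
  moreover have "0 < g k - f k" using lt by (rule diff_gr0_ennreal)
  ultimately have pos: "0 < (\<Sum>n. g n - f n)" by (rule order.strict_trans2[rotated])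
  have "suminf f + 0 < suminf f + (\<Sum>n. g n - f n)"
    using fin pos by (subst ennreal_add_left_cancel_less) auto
  then show ?thesis using eq by simp
qed

definition ps :: "(nat \<Rightarrow> real) \<Rightarrow> nat \<Rightarrow> real" where
  "ps x k = (\<Sum>i\<in>{1..k}. x i)"

definition inb :: "real \<Rightarrow> (nat \<Rightarrow> real) \<Rightarrow> nat \<Rightarrow> bool" where
  "inb b x k \<longleftrightarrow> (\<forall>j\<in>{1..k}. -b \<le> ps x j \<and> ps x j \<le> b)"

definition upE :: "real \<Rightarrow> nat \<Rightarrow> (nat \<Rightarrow> real) \<Rightarrow> bool" where
  "upE b n x \<longleftrightarrow> 1 \<le> n \<and> inb b x (n - 1) \<and> b < ps x n"

definition loE :: "real \<Rightarrow> nat \<Rightarrow> (nat \<Rightarrow> real) \<Rightarrow> bool" where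
  "loE b n x \<longleftrightarrow> 1 \<le> n \<and> inb b x (n - 1) \<and> ps x n < -b"

lemma least_exit:
  assumes "1 \<le> n" "inb b x (n - 1)" "ps x n < -b \<or> b < ps x n"
  shows "(LEAST m. 1 \<le> m \<and> (ps x m < - b \<or> ps x m > b)) = n"
proof (rule Least_equality)
  show "1 \<le> n \<and> (ps x n < - b \<or> ps x n > b)" using assms by auto
  fix m assume m: "1 \<le> m \<and> (ps x m < - b \<or> ps x m > b)"
  show "n \<le> m"
  proof (rule ccontr)
    assume "\<not> n \<le> m"
    then have "m \<in> {1..n-1}" using m by auto
    then show False using assms(2) m unfolding inb_def by force
  qed
qed

lemma exit_props:
  assumes "\<exists>m. 1 \<le> m \<and> (ps x m < - b \<or> ps x m > b)"
  defines "t \<equiv> (LEAST m. 1 \<le> m \<and> (ps x m < - b \<or> ps x m > b))"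
  shows "1 \<le> t" "ps x t < - b \<or> ps x t > b" "inb b x (t - 1)"
proof -
  have P: "1 \<le> t \<and> (ps x t < - b \<or> ps x t > b)"
    unfolding t_def using assms(1) by (rule LeastI_ex)
  then show "1 \<le> t" "ps x t < - b \<or> ps x t > b" by auto
  show "inb b x (t - 1)" unfolding inb_def
  proof
    fix j assume j: "j \<in> {1..t-1}"
    then have "j < t" by auto
    then have "\<not> (1 \<le> j \<and> (ps x j < - b \<or> ps x j > b))"
      unfolding t_def by (rule not_less_Least)
    then show "-b \<le> ps x j \<and> ps x j \<le> b" using j by auto
  qed
qed

lemma upE_unique: "upE b n x \<Longrightarrow> upE b n' x \<Longrightarrow> n = n'"
  using least_exit[of n b x] least_exit[of n' b x] unfolding upE_def by auto

lemma loE_unique: "loE b n x \<Longrightarrow> loE b n' x \<Longrightarrow> n = n'"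
  using least_exit[of n b x] least_exit[of n' b x] unfolding loE_def by auto

lemma psum_ps: "psum Z m \<omega> = ps (\<lambda>i. Z i \<omega>) m"
  unfolding psum_def ps_def ..

lemma Aup_char:
  "(exits Z b \<omega> \<and> stopped_sum Z b \<omega> > b) \<longleftrightarrow> (\<exists>n. upE b n (\<lambda>i. Z i \<omega>))"
    and Aup_val: "upE b n (\<lambda>i. Z i \<omega>) \<Longrightarrow> stopped_sum Z b \<omega> = ps (\<lambda>i. Z i \<omega>) n"
proof -
  let ?x = "\<lambda>i. Z i \<omega>"
  have et: "exit_time Z b \<omega> = (LEAST m. 1 \<le> m \<and> (ps ?x m < - b \<or> ps ?x m > b))"
    unfolding exit_time_def psum_ps ..
  have ex: "exits Z b \<omega> \<longleftrightarrow> (\<exists>m. 1 \<le> m \<and> (ps ?x m < - b \<or> ps ?x m > b))"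
    unfolding exits_def psum_ps by auto
  show val: "upE b n ?x \<Longrightarrow> stopped_sum Z b \<omega> = ps ?x n" for n
    unfolding stopped_sum_def psum_ps et using least_exit[of n b ?x] unfolding upE_def by auto
  show "(exits Z b \<omega> \<and> stopped_sum Z b \<omega> > b) \<longleftrightarrow> (\<exists>n. upE b n ?x)"
  proof
    assume a: "exits Z b \<omega> \<and> stopped_sum Z b \<omega> > b"
    then have e: "\<exists>m. 1 \<le> m \<and> (ps ?x m < - b \<or> ps ?x m > b)" using ex by auto
    have "upE b (exit_time Z b \<omega>) ?x"
      using exit_props[OF e] a unfolding upE_def et stopped_sum_def psum_ps by auto
    then show "\<exists>n. upE b n ?x" by blast
  next
    assume "\<exists>n. upE b n ?x"
    then obtain n where n: "upE b n ?x" by blast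
    then show "exits Z b \<omega> \<and> stopped_sum Z b \<omega> > b"
      using val[OF n] unfolding ex upE_def by auto
  qed
qed

lemma Alow_char:
  "(exits Z b \<omega> \<and> stopped_sum Z b \<omega> < -b) \<longleftrightarrow> (\<exists>n. loE b n (\<lambda>i. Z i \<omega>))"
    and Alow_val: "loE b n (\<lambda>i. Z i \<omega>) \<Longrightarrow> stopped_sum Z b \<omega> = ps (\<lambda>i. Z i \<omega>) n"
proof -
  let ?x = "\<lambda>i. Z i \<omega>"
  have et: "exit_time Z b \<omega> = (LEAST m. 1 \<le> m \<and> (ps ?x m < - b \<or> ps ?x m > b))"
    unfolding exit_time_def psum_ps ..
  have ex: "exits Z b \<omega> \<longleftrightarrow> (\<exists>m. 1 \<le> m \<and> (ps ?x m < - b \<or> ps ?x m > b))"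
    unfolding exits_def psum_ps by auto
  show val: "loE b n ?x \<Longrightarrow> stopped_sum Z b \<omega> = ps ?x n" for n
    unfolding stopped_sum_def psum_ps et using least_exit[of n b ?x] unfolding loE_def by auto
  show "(exits Z b \<omega> \<and> stopped_sum Z b \<omega> < -b) \<longleftrightarrow> (\<exists>n. loE b n ?x)"
  proof
    assume a: "exits Z b \<omega> \<and> stopped_sum Z b \<omega> < -b"
    then have e: "\<exists>m. 1 \<le> m \<and> (ps ?x m < - b \<or> ps ?x m > b)" using ex by auto
    have "loE b (exit_time Z b \<omega>) ?x"
      using exit_props[OF e] a unfolding loE_def et stopped_sum_def psum_ps by auto
    then show "\<exists>n. loE b n ?x" by blast
  next
    assume "\<exists>n. loE b n ?x"
    then obtain n where n: "loE b n ?x" by blast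
    then show "exits Z b \<omega> \<and> stopped_sum Z b \<omega> < -b"
      using val[OF n] unfolding ex loE_def by auto
  qed
qed

lemma suminf_single_ennreal:
  fixes f :: "nat \<Rightarrow> ennreal"
  assumes "\<And>n'. n' \<noteq> n \<Longrightarrow> f n' = 0"
  shows "suminf f = f n"
  using suminf_finite[of "{n}" f] assms by auto



lemma ins_I: "1 \<le> (n::nat) \<Longrightarrow> {1..n} = insert n {1..n-1}"
  by (cases n) (auto simp: atLeastAtMostSuc_conv)

lemma ps_upd_lt: "k < n \<Longrightarrow> ps (x(n := y)) k = ps x k"
  unfolding ps_def by (intro sum.cong) auto

lemma ps_upd_eq: "1 \<le> n \<Longrightarrow> ps (x(n := y)) n = ps x (n - 1) + y"
proof -
  assume n: "1 \<le> n"
  have I: "{1..n} = insert n {1..n-1}" using n by (cases n) (auto simp: atLeastAtMostSuc_conv)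
  have "ps (x(n := y)) n = (\<Sum>i\<in>insert n {1..n-1}. (x(n := y)) i)"
    unfolding ps_def I ..
  also have "\<dots> = (x(n := y)) n + (\<Sum>i\<in>{1..n-1}. (x(n := y)) i)"
    by (rule sum.insert) auto
  finally have e1: "ps (x(n := y)) n = y + (\<Sum>i\<in>{1..n-1}. (x(n := y)) i)" by simp
  have e2: "(\<Sum>i\<in>{1..n-1}. (x(n := y)) i) = ps x (n - 1)"
    unfolding ps_def by (intro sum.cong) auto
  show ?thesis by (simp only: e1 e2 add.commute)
qed

lemma inb_upd: "inb b (x(n := y)) (n - 1) = inb b x (n - 1)" if "1 \<le> n"
proof -
  have "\<And>j. j \<in> {1..n-1} \<Longrightarrow> ps (x(n := y)) j = ps x j" by (rule ps_upd_lt) (use that in auto)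
  then show ?thesis unfolding inb_def by auto
qed

lemma upE_upd: "1 \<le> n \<Longrightarrow> upE b n (x(n := y)) \<longleftrightarrow> inb b x (n - 1) \<and> b < ps x (n - 1) + y"
  unfolding upE_def using inb_upd[of n b x y] ps_upd_eq[of n x y] by auto

lemma loE_upd: "1 \<le> n \<Longrightarrow> loE b n (x(n := y)) \<longleftrightarrow> inb b x (n - 1) \<and> ps x (n - 1) + y < -b"
  unfolding loE_def using inb_upd[of n b x y] ps_upd_eq[of n x y] by auto

lemma inb_bounds: "0 \<le> b \<Longrightarrow> inb b x k \<Longrightarrow> -b \<le> ps x k \<and> ps x k \<le> b"
  unfolding inb_def by (cases "k = 0") (auto simp: ps_def)

lemma ps_cong: "(\<And>i. i \<in> {1..k} \<Longrightarrow> x i = y i) \<Longrightarrow> ps x k = ps y k"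
  unfolding ps_def by (rule sum.cong) auto

lemma inb_cong: "(\<And>i. i \<in> {1..k} \<Longrightarrow> x i = y i) \<Longrightarrow> inb b x k = inb b y k"
  unfolding inb_def using ps_cong[of _ x y] by auto

lemma upE_cong: assumes "\<And>i. i \<in> {1..n} \<Longrightarrow> x i = y i" shows "upE b n x = upE b n y"
proof -
  have "inb b x (n-1) = inb b y (n-1)" by (rule inb_cong) (use assms in auto)
  moreover have "ps x n = ps y n" by (rule ps_cong) (use assms in auto)
  ultimately show ?thesis unfolding upE_def by simp
qed

lemma loE_cong: assumes "\<And>i. i \<in> {1..n} \<Longrightarrow> x i = y i" shows "loE b n x = loE b n y"
proof -
  have "inb b x (n-1) = inb b y (n-1)" by (rule inb_cong) (use assms in auto)
  moreover have "ps x n = ps y n" by (rule ps_cong) (use assms in auto)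
  ultimately show ?thesis unfolding loE_def by simp
qed

lemma ps_meas_Pi: "k \<le> n \<Longrightarrow> (\<lambda>x. ps x k) \<in> borel_measurable (PiM {1..n} (\<lambda>_. borel))"
  unfolding ps_def
  by (rule borel_measurable_sum) (auto intro!: measurable_component_singleton)

lemma inb_meas_Pi: "k \<le> n \<Longrightarrow> Measurable.pred (PiM {1..n} (\<lambda>_. borel)) (\<lambda>x. inb b x k)"
  unfolding inb_def
proof (rule pred_intros_finite(3))
  fix j assume "k \<le> n" "j \<in> {1..k}"
  then have [measurable]: "(\<lambda>x. ps x j) \<in> borel_measurable (PiM {1..n} (\<lambda>_. borel))"
    by (intro ps_meas_Pi) auto
  show "Measurable.pred (PiM {1..n} (\<lambda>_. borel)) (\<lambda>x. - b \<le> ps x j \<and> ps x j \<le> b)" by measurable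
qed simp

lemma upE_meas_Pi: "Measurable.pred (PiM {1..n} (\<lambda>_. borel)) (\<lambda>x. upE b n x)"
proof -
  have [measurable]: "(\<lambda>x. ps x n) \<in> borel_measurable (PiM {1..n} (\<lambda>_. borel))" by (rule ps_meas_Pi) simp
  have [measurable]: "Measurable.pred (PiM {1..n} (\<lambda>_. borel)) (\<lambda>x. inb b x (n - 1))" by (rule inb_meas_Pi) simp
  show ?thesis unfolding upE_def by measurable
qed

lemma loE_meas_Pi: "Measurable.pred (PiM {1..n} (\<lambda>_. borel)) (\<lambda>x. loE b n x)"
proof -
  have [measurable]: "(\<lambda>x. ps x n) \<in> borel_measurable (PiM {1..n} (\<lambda>_. borel))" by (rule ps_meas_Pi) simp
  have [measurable]: "Measurable.pred (PiM {1..n} (\<lambda>_. borel)) (\<lambda>x. inb b x (n - 1))" by (rule inb_meas_Pi) simp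
  show ?thesis unfolding loE_def by measurable
qed

lemma meas_PiNN: "measurable (PiM I (\<lambda>_. NN m)) N' = measurable (PiM I (\<lambda>_. borel)) N'"
  by (rule measurable_cong_sets[OF sets_PiM_cong refl]) auto

lemma sigma_NN: "sigma_finite_measure (NN m)"
proof -
  interpret prob_space "NN m" using prob_space_normal_density[where \<mu>=m and \<sigma>=1] by simp
  show ?thesis by unfold_locales
qed

context
  fixes M :: "'a measure" and Z :: "nat \<Rightarrow> 'a \<Rightarrow> real" and \<mu> :: real
  assumes PS: "prob_space M"
    and indep: "prob_space.indep_vars M (\<lambda>_. borel) Z {1..}"
    and dist: "\<And>i. i \<ge> 1 \<Longrightarrow> distributed M lborel (Z i) (normal_density \<mu> 1)"
begin

lemma Zmeas: "i \<ge> 1 \<Longrightarrow> Z i \<in> borel_measurable M"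
  using distributed_measurable[OF dist] by simp

lemma distrZ: "i \<ge> 1 \<Longrightarrow> distr M borel (Z i) = NN \<mu>"
proof -
  assume i: "i \<ge> 1"
  have "distr M borel (Z i) = distr M lborel (Z i)" by (rule distr_cong) auto
  also have "\<dots> = NN \<mu>" using dist[OF i] unfolding distributed_def by simp
  finally show ?thesis .
qed

lemma ps_meas_M: "(\<lambda>\<omega>. ps (\<lambda>i. Z i \<omega>) k) \<in> borel_measurable M"
  unfolding ps_def by (rule borel_measurable_sum) (auto intro!: Zmeas)

lemma restr_meas: "(\<lambda>\<omega>. \<lambda>i\<in>{1..n}. Z i \<omega>) \<in> measurable M (PiM {1..n} (\<lambda>_. borel))"
  by (rule measurable_restrict) (auto intro!: Zmeas)

lemma distr_Pi:
  assumes n: "1 \<le> n"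
  shows "distr M (PiM {1..n} (\<lambda>_. borel)) (\<lambda>\<omega>. \<lambda>i\<in>{1..n}. Z i \<omega>) = PiM {1..n} (\<lambda>_. NN \<mu>)"
proof -
  interpret P: prob_space M by (rule PS)
  define Z' where "Z' = (\<lambda>i. if i \<in> {1..n} then Z i else (\<lambda>_. 0::real))"
  have rv: "\<And>i. Z' i \<in> borel_measurable M"
  proof -
    fix i show "Z' i \<in> borel_measurable M" by (cases "i \<in> {1..n}") (auto simp: Z'_def Zmeas)
  qed
  have ind: "P.indep_vars (\<lambda>_. borel) Z' {1..n}"
  proof -
    have "P.indep_vars (\<lambda>_. borel) Z {1..n}" by (rule P.indep_vars_subset[OF indep]) auto
    then show ?thesis by (rule P.indep_vars_cong[THEN iffD1, rotated 3]) (auto simp: Z'_def)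
  qed
  have "distr M (\<Pi>\<^sub>M i\<in>{1..n}. borel) (\<lambda>x. \<lambda>i\<in>{1..n}. Z' i x) = (\<Pi>\<^sub>M i\<in>{1..n}. distr M borel (Z' i))"
    using P.indep_vars_iff_distr_eq_PiM[where I="{1..n}" and M'="\<lambda>_. borel" and X=Z'] rv ind n by auto
  moreover have "(\<lambda>x. \<lambda>i\<in>{1..n}. Z' i x) = (\<lambda>\<omega>. \<lambda>i\<in>{1..n}. Z i \<omega>)"
    unfolding Z'_def by (auto simp: restrict_def fun_eq_iff)
  moreover have "(\<Pi>\<^sub>M i\<in>{1..n}. distr M borel (Z' i)) = PiM {1..n} (\<lambda>_. NN \<mu>)"
    by (rule PiM_cong) (auto simp: Z'_def distrZ)
  ultimately show ?thesis by simp
qed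

lemma transfer:
  assumes n: "1 \<le> n" and F: "F \<in> borel_measurable (PiM {1..n} (\<lambda>_. borel))"
    and dep: "\<And>x y. (\<And>i. i \<in> {1..n} \<Longrightarrow> x i = y i) \<Longrightarrow> F x = F y"
  shows "(\<integral>\<^sup>+\<omega>. F (\<lambda>i. Z i \<omega>) \<partial>M) = (\<integral>\<^sup>+x. F x \<partial>PiM {1..n} (\<lambda>_. NN \<mu>))"
proof -
  have "(\<integral>\<^sup>+\<omega>. F (\<lambda>i. Z i \<omega>) \<partial>M) = (\<integral>\<^sup>+\<omega>. F (\<lambda>i\<in>{1..n}. Z i \<omega>) \<partial>M)"
    by (rule nn_integral_cong, rule dep) auto
  also have "\<dots> = (\<integral>\<^sup>+x. F x \<partial>distr M (PiM {1..n} (\<lambda>_. borel)) (\<lambda>\<omega>. \<lambda>i\<in>{1..n}. Z i \<omega>))"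
    by (rule nn_integral_distr[symmetric, OF restr_meas]) (use F in simp)
  also have "\<dots> = (\<integral>\<^sup>+x. F x \<partial>PiM {1..n} (\<lambda>_. NN \<mu>))" unfolding distr_Pi[OF n] ..
  finally show ?thesis .
qed

lemma fubini_step:
  fixes n :: nat
  assumes n: "1 \<le> n" and F: "F \<in> borel_measurable (PiM {1..n} (\<lambda>_. borel))"
  shows "(\<integral>\<^sup>+x. F x \<partial>PiM {1..n} (\<lambda>_. NN \<mu>)) = (\<integral>\<^sup>+x. (\<integral>\<^sup>+y. F (x(n := y)) \<partial>NN \<mu>) \<partial>PiM {1..n-1} (\<lambda>_. NN \<mu>))"
proof -
  interpret product_sigma_finite "\<lambda>_. NN \<mu>" unfolding product_sigma_finite_def using sigma_NN by auto
  have I: "{1..n} = insert n {1..n-1}" using n by (rule ins_I)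
  have F': "F \<in> borel_measurable (PiM (insert n {1..n-1}) (\<lambda>_. NN \<mu>))"
    using F unfolding meas_PiNN I[symmetric] .
  show ?thesis unfolding I by (rule product_nn_integral_insert[OF _ _ F']) auto
qed

lemma compare:
  assumes n: "1 \<le> n"
    and F1: "F1 \<in> borel_measurable (PiM {1..n} (\<lambda>_. borel))"
    and F2: "F2 \<in> borel_measurable (PiM {1..n} (\<lambda>_. borel))"
    and dep1: "\<And>x y. (\<And>i. i \<in> {1..n} \<Longrightarrow> x i = y i) \<Longrightarrow> F1 x = F1 y"
    and dep2: "\<And>x y. (\<And>i. i \<in> {1..n} \<Longrightarrow> x i = y i) \<Longrightarrow> F2 x = F2 y"
    and pt: "\<And>x. (\<integral>\<^sup>+y. F1 (x(n := y)) \<partial>NN \<mu>) \<le> (\<integral>\<^sup>+y. F2 (x(n := y)) \<partial>NN \<mu>)"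
  shows "(\<integral>\<^sup>+\<omega>. F1 (\<lambda>i. Z i \<omega>) \<partial>M) \<le> (\<integral>\<^sup>+\<omega>. F2 (\<lambda>i. Z i \<omega>) \<partial>M)"
proof -
  have "(\<integral>\<^sup>+\<omega>. F1 (\<lambda>i. Z i \<omega>) \<partial>M) = (\<integral>\<^sup>+x. (\<integral>\<^sup>+y. F1 (x(n := y)) \<partial>NN \<mu>) \<partial>PiM {1..n-1} (\<lambda>_. NN \<mu>))"
    using transfer[OF n F1 dep1] fubini_step[OF n F1] by simp
  also have "\<dots> \<le> (\<integral>\<^sup>+x. (\<integral>\<^sup>+y. F2 (x(n := y)) \<partial>NN \<mu>) \<partial>PiM {1..n-1} (\<lambda>_. NN \<mu>))"
    by (rule nn_integral_mono) (rule pt)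
  also have "\<dots> = (\<integral>\<^sup>+\<omega>. F2 (\<lambda>i. Z i \<omega>) \<partial>M)"
    using transfer[OF n F2 dep2] fubini_step[OF n F2] by simp
  finally show ?thesis .
qed

end



definition aUf :: "real \<Rightarrow> real \<Rightarrow> nat \<Rightarrow> (nat \<Rightarrow> real) \<Rightarrow> ennreal" where
  "aUf \<mu> b n x = (if upE b n x then ennreal (exp (-2*\<mu>*ps x n)) else 0)"
definition pUf :: "real \<Rightarrow> nat \<Rightarrow> (nat \<Rightarrow> real) \<Rightarrow> ennreal" where
  "pUf b n x = (if upE b n x then 1 else 0)"
definition aLf :: "real \<Rightarrow> real \<Rightarrow> nat \<Rightarrow> (nat \<Rightarrow> real) \<Rightarrow> ennreal" where
  "aLf \<mu> b n x = (if loE b n x then ennreal (exp (-2*\<mu>*ps x n)) else 0)"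
definition pLf :: "real \<Rightarrow> nat \<Rightarrow> (nat \<Rightarrow> real) \<Rightarrow> ennreal" where
  "pLf b n x = (if loE b n x then 1 else 0)"

lemma aUf_meas: "aUf \<mu> b n \<in> borel_measurable (PiM {1..n} (\<lambda>_. borel))"
proof -
  have [measurable]: "(\<lambda>x. ps x n) \<in> borel_measurable (PiM {1..n} (\<lambda>_. borel))" by (rule ps_meas_Pi) simp
  have [measurable]: "Measurable.pred (PiM {1..n} (\<lambda>_. borel)) (\<lambda>x. upE b n x)" by (rule upE_meas_Pi)
  show ?thesis unfolding aUf_def by measurable
qed

lemma aLf_meas: "aLf \<mu> b n \<in> borel_measurable (PiM {1..n} (\<lambda>_. borel))"
proof -
  have [measurable]: "(\<lambda>x. ps x n) \<in> borel_measurable (PiM {1..n} (\<lambda>_. borel))" by (rule ps_meas_Pi) simp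
  have [measurable]: "Measurable.pred (PiM {1..n} (\<lambda>_. borel)) (\<lambda>x. loE b n x)" by (rule loE_meas_Pi)
  show ?thesis unfolding aLf_def by measurable
qed

lemma pUf_meas: "(\<lambda>x. c * pUf b n x) \<in> borel_measurable (PiM {1..n} (\<lambda>_. borel))"
proof -
  have [measurable]: "Measurable.pred (PiM {1..n} (\<lambda>_. borel)) (\<lambda>x. upE b n x)" by (rule upE_meas_Pi)
  show ?thesis unfolding pUf_def by measurable
qed

lemma pLf_meas: "(\<lambda>x. c * pLf b n x) \<in> borel_measurable (PiM {1..n} (\<lambda>_. borel))"
proof -
  have [measurable]: "Measurable.pred (PiM {1..n} (\<lambda>_. borel)) (\<lambda>x. loE b n x)" by (rule loE_meas_Pi)
  show ?thesis unfolding pLf_def by measurable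
qed

lemma aUf_cong: "(\<And>i. i \<in> {1..n} \<Longrightarrow> x i = y i) \<Longrightarrow> aUf \<mu> b n x = aUf \<mu> b n y"
  unfolding aUf_def using upE_cong[of n x y b] ps_cong[of n x y] by simp
lemma aLf_cong: "(\<And>i. i \<in> {1..n} \<Longrightarrow> x i = y i) \<Longrightarrow> aLf \<mu> b n x = aLf \<mu> b n y"
  unfolding aLf_def using loE_cong[of n x y b] ps_cong[of n x y] by simp
lemma pUf_cong: "(\<And>i. i \<in> {1..n} \<Longrightarrow> x i = y i) \<Longrightarrow> c * pUf b n x = c * pUf b n y"
  unfolding pUf_def using upE_cong[of n x y b] by simp
lemma pLf_cong: "(\<And>i. i \<in> {1..n} \<Longrightarrow> x i = y i) \<Longrightarrow> c * pLf b n x = c * pLf b n y"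
  unfolding pLf_def using loE_cong[of n x y b] by simp

lemma aUf_upd: "1 \<le> n \<Longrightarrow> aUf \<mu> b n (x(n := y)) =
   (if inb b x (n - 1) then (if b < ps x (n - 1) + y then ennreal (exp (-2*\<mu>*(ps x (n - 1) + y))) else 0) else 0)"
  unfolding aUf_def by (simp add: upE_upd ps_upd_eq)
lemma pUf_upd: "1 \<le> n \<Longrightarrow> pUf b n (x(n := y)) =
   (if inb b x (n - 1) then (if b < ps x (n - 1) + y then 1 else 0) else 0)"
  unfolding pUf_def by (simp add: upE_upd)
lemma aLf_upd: "1 \<le> n \<Longrightarrow> aLf \<mu> b n (x(n := y)) =
   (if inb b x (n - 1) then (if ps x (n - 1) + y < -b then ennreal (exp (-2*\<mu>*(ps x (n - 1) + y))) else 0) else 0)"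
  unfolding aLf_def by (simp add: loE_upd ps_upd_eq)
lemma pLf_upd: "1 \<le> n \<Longrightarrow> pLf b n (x(n := y)) =
   (if inb b x (n - 1) then (if ps x (n - 1) + y < -b then 1 else 0) else 0)"
  unfolding pLf_def by (simp add: loE_upd)


lemma pt_U_low:
  assumes mu: "\<mu> > 0" and b: "b > 0" and n: "1 \<le> n"
  shows "(\<integral>\<^sup>+ y. ennreal (Rratio (-\<mu>) * exp (-2*\<mu>*b)) * pUf b n (x(n := y)) \<partial>NN \<mu>)
    \<le> (\<integral>\<^sup>+ y. aUf \<mu> b n (x(n := y)) \<partial>NN \<mu>)"
proof (cases "inb b x (n - 1)")
  case True
  define s where "s = ps x (n - 1)"
  have sb: "s \<le> b" using inb_bounds[OF _ True] b unfolding s_def by auto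
  have "(\<integral>\<^sup>+ y. ennreal (Rratio (-\<mu>) * exp (-2*\<mu>*b)) * pUf b n (x(n := y)) \<partial>NN \<mu>)
     = ennreal (Rratio (-\<mu>) * exp (-2*\<mu>*b)) * (\<integral>\<^sup>+ y. (if b < s + y then 1 else 0) \<partial>NN \<mu>)"
    unfolding pUf_upd[OF n] using True unfolding s_def[symmetric]
    by (simp add: nn_integral_cmult)
  also have "\<dots> \<le> (\<integral>\<^sup>+ y. (if b < s + y then ennreal (exp (-2*\<mu>*(s+y))) else 0) \<partial>NN \<mu>)"
    by (rule U_lower(1)[OF mu sb])
  also have "\<dots> = (\<integral>\<^sup>+ y. aUf \<mu> b n (x(n := y)) \<partial>NN \<mu>)"
    unfolding aUf_upd[OF n] using True unfolding s_def[symmetric] by simp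
  finally show ?thesis .
qed (simp add: pUf_upd[OF n] aUf_upd[OF n])

lemma pt_U_up:
  assumes mu: "\<mu> > 0" and b: "b > 0" and n: "1 \<le> n"
  shows "(\<integral>\<^sup>+ y. aUf \<mu> b n (x(n := y)) \<partial>NN \<mu>)
    \<le> (\<integral>\<^sup>+ y. ennreal (exp (-2*\<mu>*b)) * pUf b n (x(n := y)) \<partial>NN \<mu>)"
proof (cases "inb b x (n - 1)")
  case True
  define s where "s = ps x (n - 1)"
  have sb: "s \<le> b" using inb_bounds[OF _ True] b unfolding s_def by auto
  have "(\<integral>\<^sup>+ y. aUf \<mu> b n (x(n := y)) \<partial>NN \<mu>) = (\<integral>\<^sup>+ y. (if b < s + y then ennreal (exp (-2*\<mu>*(s+y))) else 0) \<partial>NN \<mu>)"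
    unfolding aUf_upd[OF n] using True unfolding s_def[symmetric] by simp
  also have "\<dots> \<le> ennreal (exp (-2*\<mu>*b)) * (\<integral>\<^sup>+ y. (if b < s + y then 1 else 0) \<partial>NN \<mu>)"
    by (rule less_imp_le[OF U_upper[OF mu sb]])
  also have "\<dots> = (\<integral>\<^sup>+ y. ennreal (exp (-2*\<mu>*b)) * pUf b n (x(n := y)) \<partial>NN \<mu>)"
    unfolding pUf_upd[OF n] using True unfolding s_def[symmetric]
    by (simp add: nn_integral_cmult)
  finally show ?thesis .
qed (simp add: pUf_upd[OF n] aUf_upd[OF n])

lemma pt_L_low:
  assumes mu: "\<mu> > 0" and b: "b > 0" and n: "1 \<le> n"
  shows "(\<integral>\<^sup>+ y. ennreal (exp (2*\<mu>*b)) * pLf b n (x(n := y)) \<partial>NN \<mu>)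
    \<le> (\<integral>\<^sup>+ y. aLf \<mu> b n (x(n := y)) \<partial>NN \<mu>)"
proof (cases "inb b x (n - 1)")
  case True
  define s where "s = ps x (n - 1)"
  have sb: "-b \<le> s" using inb_bounds[OF _ True] b unfolding s_def by auto
  have "(\<integral>\<^sup>+ y. ennreal (exp (2*\<mu>*b)) * pLf b n (x(n := y)) \<partial>NN \<mu>)
     = ennreal (exp (2*\<mu>*b)) * (\<integral>\<^sup>+ y. (if s + y < -b then 1 else 0) \<partial>NN \<mu>)"
    unfolding pLf_upd[OF n] using True unfolding s_def[symmetric]
    by (simp add: nn_integral_cmult)
  also have "\<dots> \<le> (\<integral>\<^sup>+ y. (if s + y < -b then ennreal (exp (-2*\<mu>*(s+y))) else 0) \<partial>NN \<mu>)"
    by (rule less_imp_le[OF L_lower[OF mu sb]])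
  also have "\<dots> = (\<integral>\<^sup>+ y. aLf \<mu> b n (x(n := y)) \<partial>NN \<mu>)"
    unfolding aLf_upd[OF n] using True unfolding s_def[symmetric] by simp
  finally show ?thesis .
qed (simp add: pLf_upd[OF n] aLf_upd[OF n])

lemma pt_L_up:
  assumes mu: "\<mu> > 0" and b: "b > 0" and n: "1 \<le> n"
  shows "(\<integral>\<^sup>+ y. aLf \<mu> b n (x(n := y)) \<partial>NN \<mu>)
    \<le> (\<integral>\<^sup>+ y. ennreal (exp (2*\<mu>*b) * Rratio \<mu>) * pLf b n (x(n := y)) \<partial>NN \<mu>)"
proof (cases "inb b x (n - 1)")
  case True
  define s where "s = ps x (n - 1)"
  have sb: "-b \<le> s" using inb_bounds[OF _ True] b unfolding s_def by auto
  have "(\<integral>\<^sup>+ y. aLf \<mu> b n (x(n := y)) \<partial>NN \<mu>) = (\<integral>\<^sup>+ y. (if s + y < -b then ennreal (exp (-2*\<mu>*(s+y))) else 0) \<partial>NN \<mu>)"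
    unfolding aLf_upd[OF n] using True unfolding s_def[symmetric] by simp
  also have "\<dots> \<le> ennreal (exp (2*\<mu>*b) * Rratio \<mu>) * (\<integral>\<^sup>+ y. (if s + y < -b then 1 else 0) \<partial>NN \<mu>)"
    by (rule L_upper(1)[OF mu sb])
  also have "\<dots> = (\<integral>\<^sup>+ y. ennreal (exp (2*\<mu>*b) * Rratio \<mu>) * pLf b n (x(n := y)) \<partial>NN \<mu>)"
    unfolding pLf_upd[OF n] using True unfolding s_def[symmetric]
    by (simp add: nn_integral_cmult)
  finally show ?thesis .
qed (simp add: pLf_upd[OF n] aLf_upd[OF n])



lemma final_conv:
  fixes P A :: ennreal and c d :: real
  assumes l: "ennreal c * P < A" and u: "A < ennreal d * P" and P: "P < \<infinity>" and c: "0 \<le> c" and d: "0 \<le> d"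
  shows "c < enn2real A / enn2real P \<and> enn2real A / enn2real P < d"
proof -
  obtain p where p: "P = ennreal p" "0 \<le> p" using P by (cases P) auto
  have "A < ennreal (d * p)" using u p d by (simp add: ennreal_mult)
  then obtain a where a: "A = ennreal a" "0 \<le> a" by (cases A) auto
  have "ennreal (c * p) < ennreal a" using l p a c by (simp add: ennreal_mult)
  then have ca: "c * p < a" using c p by (subst (asm) ennreal_less_iff) auto
  have "ennreal a < ennreal (d * p)" using u p a d by (simp add: ennreal_mult)
  then have ad: "a < d * p" using a by (subst (asm) ennreal_less_iff) auto
  have pp: "p > 0" using ad a(2) p(2) d by (cases "p = 0") auto
  show ?thesis unfolding p a using pp p a ca ad by (simp add: field_simps)
qed

lemma sum_bounds:
  fixes a p :: "nat \<Rightarrow> ennreal" and c d :: real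
  assumes le1: "\<And>n. ennreal c * p n \<le> a n" and lt1: "ennreal c * p 1 < a 1"
    and le2: "\<And>n. a n \<le> ennreal d * p n" and lt2: "a 1 < ennreal d * p 1"
    and Pfin: "suminf p < \<infinity>"
  shows "ennreal c * suminf p < suminf a" "suminf a < ennreal d * suminf p"
proof -
  have f1: "(\<Sum>n. ennreal c * p n) < \<infinity>" using Pfin by (simp add: ennreal_mult_less_top)
  show "ennreal c * suminf p < suminf a"
    using suminf_strict_ennreal[of "\<lambda>n. ennreal c * p n" a 1] le1 lt1 f1 by simp
  have "suminf a \<le> (\<Sum>n. ennreal d * p n)" by (rule suminf_le) (use le2 in auto)
  then have f2: "suminf a < \<infinity>" using Pfin by (simp add: ennreal_mult_less_top le_less_trans)
  show "suminf a < ennreal d * suminf p"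
    using suminf_strict_ennreal[of a "\<lambda>n. ennreal d * p n" 1] le2 lt2 f2 by simp
qed

locale rw =
  fixes M :: "'a measure" and Z :: "nat \<Rightarrow> 'a \<Rightarrow> real" and \<mu> b :: real
  assumes PS: "prob_space M"
    and indep: "prob_space.indep_vars M (\<lambda>_. borel) Z {1..}"
    and dist: "\<And>i. i \<ge> 1 \<Longrightarrow> distributed M lborel (Z i) (normal_density \<mu> 1)"
    and mu: "\<mu> > 0" and b: "b > 0"

context rw
begin

lemma psM[measurable]: "(\<lambda>\<omega>. ps (\<lambda>i. Z i \<omega>) k) \<in> borel_measurable M"
  by (rule ps_meas_M[OF PS indep dist])

lemma upE_M[measurable]: "Measurable.pred M (\<lambda>\<omega>. upE b n (\<lambda>i. Z i \<omega>))"
  unfolding upE_def inb_def by measurable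

lemma loE_M[measurable]: "Measurable.pred M (\<lambda>\<omega>. loE b n (\<lambda>i. Z i \<omega>))"
  unfolding loE_def inb_def by measurable

lemma aUf_M[measurable]: "(\<lambda>\<omega>. aUf \<mu> b n (\<lambda>i. Z i \<omega>)) \<in> borel_measurable M"
  unfolding aUf_def by measurable
lemma pUf_M[measurable]: "(\<lambda>\<omega>. pUf b n (\<lambda>i. Z i \<omega>)) \<in> borel_measurable M"
  unfolding pUf_def by measurable
lemma aLf_M[measurable]: "(\<lambda>\<omega>. aLf \<mu> b n (\<lambda>i. Z i \<omega>)) \<in> borel_measurable M"
  unfolding aLf_def by measurable
lemma pLf_M[measurable]: "(\<lambda>\<omega>. pLf b n (\<lambda>i. Z i \<omega>)) \<in> borel_measurable M"
  unfolding pLf_def by measurable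

lemma gen_term:
  fixes Fa Fb :: "nat \<Rightarrow> (nat \<Rightarrow> real) \<Rightarrow> ennreal" and c :: ennreal
  assumes z: "\<And>x. Fa 0 x = 0"
    and m1: "\<And>n. (\<lambda>x. c * Fa n x) \<in> borel_measurable (PiM {1..n} (\<lambda>_. borel))"
    and m2: "\<And>n. Fb n \<in> borel_measurable (PiM {1..n} (\<lambda>_. borel))"
    and mM: "\<And>n. (\<lambda>\<omega>. Fa n (\<lambda>i. Z i \<omega>)) \<in> borel_measurable M"
    and d1: "\<And>n x y. (\<And>i. i \<in> {1..n} \<Longrightarrow> x i = y i) \<Longrightarrow> c * Fa n x = c * Fa n y"
    and d2: "\<And>n x y. (\<And>i. i \<in> {1..n} \<Longrightarrow> x i = y i) \<Longrightarrow> Fb n x = Fb n y"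
    and pt: "\<And>n x. 1 \<le> n \<Longrightarrow> (\<integral>\<^sup>+y. c * Fa n (x(n := y)) \<partial>NN \<mu>) \<le> (\<integral>\<^sup>+y. Fb n (x(n := y)) \<partial>NN \<mu>)"
  shows "c * (\<integral>\<^sup>+\<omega>. Fa n (\<lambda>i. Z i \<omega>) \<partial>M) \<le> (\<integral>\<^sup>+\<omega>. Fb n (\<lambda>i. Z i \<omega>) \<partial>M)"
proof (cases "n = 0")
  case True then show ?thesis using z by simp
next
  case False
  then have n: "1 \<le> n" by simp
  have "c * (\<integral>\<^sup>+\<omega>. Fa n (\<lambda>i. Z i \<omega>) \<partial>M) = (\<integral>\<^sup>+\<omega>. c * Fa n (\<lambda>i. Z i \<omega>) \<partial>M)"
    by (rule nn_integral_cmult[symmetric]) (rule mM)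
  also have "\<dots> \<le> (\<integral>\<^sup>+\<omega>. Fb n (\<lambda>i. Z i \<omega>) \<partial>M)"
    by (rule compare[OF PS indep dist n m1 m2 d1 d2 pt[OF n]])
  finally show ?thesis .
qed


lemma Zm1: "Z 1 \<in> borel_measurable M" using Zmeas[OF PS indep dist, of 1] by simp

lemma one_gen:
  fixes g :: "real \<Rightarrow> ennreal" and F :: "(nat \<Rightarrow> real) \<Rightarrow> ennreal"
  assumes F: "\<And>x. F x = g (x 1)" and g: "g \<in> borel_measurable borel"
  shows "(\<integral>\<^sup>+\<omega>. F (\<lambda>i. Z i \<omega>) \<partial>M) = (\<integral>\<^sup>+y. g y \<partial>NN \<mu>)"
proof -
  have "(\<integral>\<^sup>+\<omega>. F (\<lambda>i. Z i \<omega>) \<partial>M) = (\<integral>\<^sup>+\<omega>. g (Z 1 \<omega>) \<partial>M)" unfolding F ..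
  also have "\<dots> = (\<integral>\<^sup>+y. g y \<partial>distr M borel (Z 1))"
    by (rule nn_integral_distr[symmetric, OF Zm1]) (use g in simp)
  also have "\<dots> = (\<integral>\<^sup>+y. g y \<partial>NN \<mu>)" using distrZ[OF PS indep dist, of 1] by simp
  finally show ?thesis .
qed

lemma upE1: "upE b (Suc 0) x \<longleftrightarrow> b < x (Suc 0)" unfolding upE_def inb_def ps_def by simp
lemma loE1: "loE b (Suc 0) x \<longleftrightarrow> x (Suc 0) < -b" unfolding loE_def inb_def ps_def by simp
lemma ps1: "ps x (Suc 0) = x (Suc 0)" unfolding ps_def by simp

lemma one_pU: "(\<integral>\<^sup>+\<omega>. pUf b 1 (\<lambda>i. Z i \<omega>) \<partial>M) = (\<integral>\<^sup>+y. (if b < 0 + y then 1 else 0) \<partial>NN \<mu>)"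
  by (rule one_gen) (auto simp: pUf_def upE1)
lemma one_aU: "(\<integral>\<^sup>+\<omega>. aUf \<mu> b 1 (\<lambda>i. Z i \<omega>) \<partial>M) = (\<integral>\<^sup>+y. (if b < 0 + y then ennreal (exp (-2*\<mu>*(0+y))) else 0) \<partial>NN \<mu>)"
  by (rule one_gen) (auto simp: aUf_def upE1 ps1)
lemma one_pL: "(\<integral>\<^sup>+\<omega>. pLf b 1 (\<lambda>i. Z i \<omega>) \<partial>M) = (\<integral>\<^sup>+y. (if 0 + y < -b then 1 else 0) \<partial>NN \<mu>)"
  by (rule one_gen) (auto simp: pLf_def loE1)
lemma one_aL: "(\<integral>\<^sup>+\<omega>. aLf \<mu> b 1 (\<lambda>i. Z i \<omega>) \<partial>M) = (\<integral>\<^sup>+y. (if 0 + y < -b then ennreal (exp (-2*\<mu>*(0+y))) else 0) \<partial>NN \<mu>)"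
  by (rule one_gen) (auto simp: aLf_def loE1 ps1)

lemma sumU:
  "ennreal (indicator {\<omega> \<in> space M. exits Z b \<omega> \<and> stopped_sum Z b \<omega> > b} \<omega> * exp (- 2 * \<mu> * stopped_sum Z b \<omega>))
    = (\<Sum>n. aUf \<mu> b n (\<lambda>i. Z i \<omega>))"
   "ennreal (indicator {\<omega> \<in> space M. exits Z b \<omega> \<and> stopped_sum Z b \<omega> > b} \<omega>)
    = (\<Sum>n. pUf b n (\<lambda>i. Z i \<omega>))" if om: "\<omega> \<in> space M"
proof -
  have "(ennreal (indicator {\<omega> \<in> space M. exits Z b \<omega> \<and> stopped_sum Z b \<omega> > b} \<omega> * exp (- 2 * \<mu> * stopped_sum Z b \<omega>))
    = (\<Sum>n. aUf \<mu> b n (\<lambda>i. Z i \<omega>))) \<and>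
   (ennreal (indicator {\<omega> \<in> space M. exits Z b \<omega> \<and> stopped_sum Z b \<omega> > b} \<omega>)
    = (\<Sum>n. pUf b n (\<lambda>i. Z i \<omega>)))"
  proof (cases "\<exists>n. upE b n (\<lambda>i. Z i \<omega>)")
    case True
    then obtain n where n: "upE b n (\<lambda>i. Z i \<omega>)" by blast
    have oth: "\<And>n'. n' \<noteq> n \<Longrightarrow> \<not> upE b n' (\<lambda>i. Z i \<omega>)" using upE_unique n by blast
    have inA: "\<omega> \<in> {\<omega> \<in> space M. exits Z b \<omega> \<and> stopped_sum Z b \<omega> > b}"
      using om Aup_char[of Z b \<omega>] True by auto
    have s1: "(\<Sum>n. aUf \<mu> b n (\<lambda>i. Z i \<omega>)) = aUf \<mu> b n (\<lambda>i. Z i \<omega>)"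
      by (rule suminf_single_ennreal) (auto simp: aUf_def oth)
    have s2: "(\<Sum>n. pUf b n (\<lambda>i. Z i \<omega>)) = pUf b n (\<lambda>i. Z i \<omega>)"
      by (rule suminf_single_ennreal) (auto simp: pUf_def oth)
    show ?thesis unfolding s1 s2 using inA n Aup_val[where Z=Z and \<omega>=\<omega> and b=b and n=n, OF n] by (simp add: aUf_def pUf_def)
  next
    case False
    have inA: "\<omega> \<notin> {\<omega> \<in> space M. exits Z b \<omega> \<and> stopped_sum Z b \<omega> > b}"
      using Aup_char[of Z b \<omega>] False by auto
    show ?thesis using inA False by (simp add: aUf_def pUf_def)
  qed
  then show "ennreal (indicator {\<omega> \<in> space M. exits Z b \<omega> \<and> stopped_sum Z b \<omega> > b} \<omega> * exp (- 2 * \<mu> * stopped_sum Z b \<omega>))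
    = (\<Sum>n. aUf \<mu> b n (\<lambda>i. Z i \<omega>))"
   "ennreal (indicator {\<omega> \<in> space M. exits Z b \<omega> \<and> stopped_sum Z b \<omega> > b} \<omega>)
    = (\<Sum>n. pUf b n (\<lambda>i. Z i \<omega>))" by auto
qed

lemma sumL:
  "ennreal (indicator {\<omega> \<in> space M. exits Z b \<omega> \<and> stopped_sum Z b \<omega> < - b} \<omega> * exp (- 2 * \<mu> * stopped_sum Z b \<omega>))
    = (\<Sum>n. aLf \<mu> b n (\<lambda>i. Z i \<omega>))"
   "ennreal (indicator {\<omega> \<in> space M. exits Z b \<omega> \<and> stopped_sum Z b \<omega> < - b} \<omega>)
    = (\<Sum>n. pLf b n (\<lambda>i. Z i \<omega>))" if om: "\<omega> \<in> space M"
proof -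
  have "(ennreal (indicator {\<omega> \<in> space M. exits Z b \<omega> \<and> stopped_sum Z b \<omega> < - b} \<omega> * exp (- 2 * \<mu> * stopped_sum Z b \<omega>))
    = (\<Sum>n. aLf \<mu> b n (\<lambda>i. Z i \<omega>))) \<and>
   (ennreal (indicator {\<omega> \<in> space M. exits Z b \<omega> \<and> stopped_sum Z b \<omega> < - b} \<omega>)
    = (\<Sum>n. pLf b n (\<lambda>i. Z i \<omega>)))"
  proof (cases "\<exists>n. loE b n (\<lambda>i. Z i \<omega>)")
    case True
    then obtain n where n: "loE b n (\<lambda>i. Z i \<omega>)" by blast
    have oth: "\<And>n'. n' \<noteq> n \<Longrightarrow> \<not> loE b n' (\<lambda>i. Z i \<omega>)" using loE_unique n by blast
    have inA: "\<omega> \<in> {\<omega> \<in> space M. exits Z b \<omega> \<and> stopped_sum Z b \<omega> < - b}"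
      using om Alow_char[of Z b \<omega>] True by auto
    have s1: "(\<Sum>n. aLf \<mu> b n (\<lambda>i. Z i \<omega>)) = aLf \<mu> b n (\<lambda>i. Z i \<omega>)"
      by (rule suminf_single_ennreal) (auto simp: aLf_def oth)
    have s2: "(\<Sum>n. pLf b n (\<lambda>i. Z i \<omega>)) = pLf b n (\<lambda>i. Z i \<omega>)"
      by (rule suminf_single_ennreal) (auto simp: pLf_def oth)
    show ?thesis unfolding s1 s2 using inA n Alow_val[where Z=Z and \<omega>=\<omega> and b=b and n=n, OF n] by (simp add: aLf_def pLf_def)
  next
    case False
    have inA: "\<omega> \<notin> {\<omega> \<in> space M. exits Z b \<omega> \<and> stopped_sum Z b \<omega> < - b}"
      using Alow_char[of Z b \<omega>] False by auto
    show ?thesis using inA False by (simp add: aLf_def pLf_def)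
  qed
  then show "ennreal (indicator {\<omega> \<in> space M. exits Z b \<omega> \<and> stopped_sum Z b \<omega> < - b} \<omega> * exp (- 2 * \<mu> * stopped_sum Z b \<omega>))
    = (\<Sum>n. aLf \<mu> b n (\<lambda>i. Z i \<omega>))"
   "ennreal (indicator {\<omega> \<in> space M. exits Z b \<omega> \<and> stopped_sum Z b \<omega> < - b} \<omega>)
    = (\<Sum>n. pLf b n (\<lambda>i. Z i \<omega>))" by auto
qed


end


context rw
begin
lemma up_result:
  defines "AU \<equiv> {\<omega> \<in> space M. exits Z b \<omega> \<and> stopped_sum Z b \<omega> > b}"
    and "X \<equiv> (\<lambda>\<omega>. exp (- 2 * \<mu> * stopped_sum Z b \<omega>))"
  shows "Rratio (- \<mu>) * exp (- 2 * \<mu> * b) < cond_exp_event M X AU \<and> cond_exp_event M X AU < exp (- 2 * \<mu> * b)"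
proof -
  interpret P: prob_space M by (rule PS)
  define a where "a n = (\<integral>\<^sup>+\<omega>. aUf \<mu> b n (\<lambda>i. Z i \<omega>) \<partial>M)" for n
  define p where "p n = (\<integral>\<^sup>+\<omega>. pUf b n (\<lambda>i. Z i \<omega>) \<partial>M)" for n
  have c0: "0 \<le> Rratio (- \<mu>) * exp (- 2 * \<mu> * b)" using R_pos[of \<mu>] by simp
  have le1: "ennreal (Rratio (- \<mu>) * exp (- 2 * \<mu> * b)) * p n \<le> a n" for n
    unfolding a_def p_def
    by (rule gen_term[OF _ pUf_meas aUf_meas pUf_M pUf_cong aUf_cong pt_U_low[OF mu b]]) (auto simp: pUf_def upE_def)
  have lt1: "ennreal (Rratio (- \<mu>) * exp (- 2 * \<mu> * b)) * p 1 < a 1"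
    unfolding a_def p_def one_pU one_aU using U_lower(2)[OF mu, of 0 b] b by simp
  have le2: "a n \<le> ennreal (exp (- 2 * \<mu> * b)) * p n" for n
  proof -
    have z2: "\<And>x. aUf \<mu> b 0 x = 0" by (simp add: aUf_def upE_def)
    have m1': "\<And>n. (\<lambda>x. 1 * aUf \<mu> b n x) \<in> borel_measurable (PiM {1..n} (\<lambda>_. borel))" using aUf_meas by simp
    have d1': "\<And>n x y. (\<And>i. i \<in> {1..n} \<Longrightarrow> x i = y i) \<Longrightarrow> 1 * aUf \<mu> b n x = 1 * aUf \<mu> b n y"
    proof -
      fix n x y assume h: "\<And>i. i \<in> {1..n} \<Longrightarrow> (x::nat\<Rightarrow>real) i = y i"
      show "1 * aUf \<mu> b n x = 1 * aUf \<mu> b n y" using aUf_cong[OF h] by simp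
    qed
    have pt': "\<And>n x. 1 \<le> n \<Longrightarrow> (\<integral>\<^sup>+y. 1 * aUf \<mu> b n (x(n := y)) \<partial>NN \<mu>) \<le> (\<integral>\<^sup>+y. ennreal (exp (- 2 * \<mu> * b)) * pUf b n (x(n := y)) \<partial>NN \<mu>)"
      using pt_U_up[OF mu b] by simp
    have "1 * a n \<le> (\<integral>\<^sup>+\<omega>. ennreal (exp (- 2 * \<mu> * b)) * pUf b n (\<lambda>i. Z i \<omega>) \<partial>M)"
      unfolding a_def by (rule gen_term[OF z2 m1' pUf_meas aUf_M d1' pUf_cong pt'])
    also have "\<dots> = ennreal (exp (- 2 * \<mu> * b)) * p n" unfolding p_def by (rule nn_integral_cmult) simp
    finally show ?thesis by simp
  qed
  have lt2: "a 1 < ennreal (exp (- 2 * \<mu> * b)) * p 1"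
    unfolding a_def p_def one_pU one_aU using U_upper[OF mu, of 0 b] b by simp
  have AUc: "AU = {\<omega> \<in> space M. \<exists>n. upE b n (\<lambda>i. Z i \<omega>)}"
    unfolding AU_def using Aup_char[of Z b] by auto
  have AUs: "AU \<in> sets M" unfolding AUc by measurable
  have A_eq: "(\<integral>\<^sup>+\<omega>. ennreal (indicator AU \<omega> * X \<omega>) \<partial>M) = suminf a"
  proof -
    have "(\<integral>\<^sup>+\<omega>. ennreal (indicator AU \<omega> * X \<omega>) \<partial>M) = (\<integral>\<^sup>+\<omega>. (\<Sum>n. aUf \<mu> b n (\<lambda>i. Z i \<omega>)) \<partial>M)"
      apply (rule nn_integral_cong) unfolding AU_def X_def by (rule sumU(1))
    also have "\<dots> = suminf a" unfolding a_def by (rule nn_integral_suminf) simp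
    finally show ?thesis .
  qed
  have P_eq: "emeasure M AU = suminf p"
  proof -
    have "emeasure M AU = (\<integral>\<^sup>+\<omega>. indicator AU \<omega> \<partial>M)" using AUs by simp
    also have "\<dots> = (\<integral>\<^sup>+\<omega>. (\<Sum>n. pUf b n (\<lambda>i. Z i \<omega>)) \<partial>M)"
      by (rule nn_integral_cong) (auto simp: AU_def sumU(2)[symmetric] indicator_def)
    also have "\<dots> = suminf p" unfolding p_def by (rule nn_integral_suminf) simp
    finally show ?thesis .
  qed
  have Pfin: "suminf p < \<infinity>" unfolding P_eq[symmetric] by (simp add: less_top[symmetric])
  have bnds: "ennreal (Rratio (- \<mu>) * exp (- 2 * \<mu> * b)) * suminf p < suminf a"
      "suminf a < ennreal (exp (- 2 * \<mu> * b)) * suminf p"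
    using sum_bounds[OF le1 lt1 le2 lt2 Pfin] by auto
  have conv: "Rratio (- \<mu>) * exp (- 2 * \<mu> * b) < enn2real (suminf a) / enn2real (suminf p)
      \<and> enn2real (suminf a) / enn2real (suminf p) < exp (- 2 * \<mu> * b)"
    by (rule final_conv[OF bnds Pfin c0]) simp
  have meas: "(\<lambda>\<omega>. indicator AU \<omega> * X \<omega>) \<in> borel_measurable M"
  proof -
    have "(\<lambda>\<omega>. enn2real (\<Sum>n. aUf \<mu> b n (\<lambda>i. Z i \<omega>))) \<in> borel_measurable M" by measurable
    moreover have "\<And>\<omega>. \<omega> \<in> space M \<Longrightarrow> enn2real (\<Sum>n. aUf \<mu> b n (\<lambda>i. Z i \<omega>)) = indicator AU \<omega> * X \<omega>"
      unfolding AU_def X_def by (simp add: sumU(1)[symmetric])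
    ultimately show ?thesis by (rule measurable_cong[THEN iffD1, rotated])
  qed
  have int_eq: "integral\<^sup>L M (\<lambda>\<omega>. indicator AU \<omega> * X \<omega>) = enn2real (suminf a)"
    unfolding A_eq[symmetric] by (rule integral_eq_nn_integral[OF meas]) (simp add: X_def)
  have "cond_exp_event M X AU = enn2real (suminf a) / enn2real (suminf p)"
    unfolding cond_exp_event_def int_eq measure_def P_eq ..
  then show ?thesis using conv by simp
qed


lemma low_result:
  defines "AU \<equiv> {\<omega> \<in> space M. exits Z b \<omega> \<and> stopped_sum Z b \<omega> < - b}"
    and "X \<equiv> (\<lambda>\<omega>. exp (- 2 * \<mu> * stopped_sum Z b \<omega>))"
  shows "exp (2 * \<mu> * b) < cond_exp_event M X AU \<and> cond_exp_event M X AU < exp (2 * \<mu> * b) * Rratio \<mu>"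
proof -
  interpret P: prob_space M by (rule PS)
  define a where "a n = (\<integral>\<^sup>+\<omega>. aLf \<mu> b n (\<lambda>i. Z i \<omega>) \<partial>M)" for n
  define p where "p n = (\<integral>\<^sup>+\<omega>. pLf b n (\<lambda>i. Z i \<omega>) \<partial>M)" for n
  have c0: "0 \<le> exp (2 * \<mu> * b)" by simp
  have le1: "ennreal (exp (2 * \<mu> * b)) * p n \<le> a n" for n
    unfolding a_def p_def
    by (rule gen_term[OF _ pLf_meas aLf_meas pLf_M pLf_cong aLf_cong pt_L_low[OF mu b]]) (auto simp: pLf_def loE_def)
  have lt1: "ennreal (exp (2 * \<mu> * b)) * p 1 < a 1"
    unfolding a_def p_def one_pL one_aL using L_lower[OF mu, of b 0] b by simp
  have le2: "a n \<le> ennreal (exp (2 * \<mu> * b) * Rratio \<mu>) * p n" for n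
  proof -
    have z2: "\<And>x. aLf \<mu> b 0 x = 0" by (simp add: aLf_def loE_def)
    have m1': "\<And>n. (\<lambda>x. 1 * aLf \<mu> b n x) \<in> borel_measurable (PiM {1..n} (\<lambda>_. borel))" using aLf_meas by simp
    have d1': "\<And>n x y. (\<And>i. i \<in> {1..n} \<Longrightarrow> x i = y i) \<Longrightarrow> 1 * aLf \<mu> b n x = 1 * aLf \<mu> b n y"
    proof -
      fix n x y assume h: "\<And>i. i \<in> {1..n} \<Longrightarrow> (x::nat\<Rightarrow>real) i = y i"
      show "1 * aLf \<mu> b n x = 1 * aLf \<mu> b n y" using aLf_cong[OF h] by simp
    qed
    have pt': "\<And>n x. 1 \<le> n \<Longrightarrow> (\<integral>\<^sup>+y. 1 * aLf \<mu> b n (x(n := y)) \<partial>NN \<mu>) \<le> (\<integral>\<^sup>+y. ennreal (exp (2 * \<mu> * b) * Rratio \<mu>) * pLf b n (x(n := y)) \<partial>NN \<mu>)"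
      using pt_L_up[OF mu b] by simp
    have "1 * a n \<le> (\<integral>\<^sup>+\<omega>. ennreal (exp (2 * \<mu> * b) * Rratio \<mu>) * pLf b n (\<lambda>i. Z i \<omega>) \<partial>M)"
      unfolding a_def by (rule gen_term[OF z2 m1' pLf_meas aLf_M d1' pLf_cong pt'])
    also have "\<dots> = ennreal (exp (2 * \<mu> * b) * Rratio \<mu>) * p n" unfolding p_def by (rule nn_integral_cmult) simp
    finally show ?thesis by simp
  qed
  have lt2: "a 1 < ennreal (exp (2 * \<mu> * b) * Rratio \<mu>) * p 1"
    unfolding a_def p_def one_pL one_aL using L_upper(2)[OF mu, of b 0] b by simp
  have AUc: "AU = {\<omega> \<in> space M. \<exists>n. loE b n (\<lambda>i. Z i \<omega>)}"
    unfolding AU_def using Alow_char[of Z b] by auto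
  have AUs: "AU \<in> sets M" unfolding AUc by measurable
  have A_eq: "(\<integral>\<^sup>+\<omega>. ennreal (indicator AU \<omega> * X \<omega>) \<partial>M) = suminf a"
  proof -
    have "(\<integral>\<^sup>+\<omega>. ennreal (indicator AU \<omega> * X \<omega>) \<partial>M) = (\<integral>\<^sup>+\<omega>. (\<Sum>n. aLf \<mu> b n (\<lambda>i. Z i \<omega>)) \<partial>M)"
      apply (rule nn_integral_cong) unfolding AU_def X_def by (rule sumL(1))
    also have "\<dots> = suminf a" unfolding a_def by (rule nn_integral_suminf) simp
    finally show ?thesis .
  qed
  have P_eq: "emeasure M AU = suminf p"
  proof -
    have "emeasure M AU = (\<integral>\<^sup>+\<omega>. indicator AU \<omega> \<partial>M)" using AUs by simp
    also have "\<dots> = (\<integral>\<^sup>+\<omega>. (\<Sum>n. pLf b n (\<lambda>i. Z i \<omega>)) \<partial>M)"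
      by (rule nn_integral_cong) (auto simp: AU_def sumL(2)[symmetric] indicator_def)
    also have "\<dots> = suminf p" unfolding p_def by (rule nn_integral_suminf) simp
    finally show ?thesis .
  qed
  have Pfin: "suminf p < \<infinity>" unfolding P_eq[symmetric] by (simp add: less_top[symmetric])
  have bnds: "ennreal (exp (2 * \<mu> * b)) * suminf p < suminf a"
      "suminf a < ennreal (exp (2 * \<mu> * b) * Rratio \<mu>) * suminf p"
    using sum_bounds[OF le1 lt1 le2 lt2 Pfin] by auto
  have conv: "exp (2 * \<mu> * b) < enn2real (suminf a) / enn2real (suminf p)
      \<and> enn2real (suminf a) / enn2real (suminf p) < exp (2 * \<mu> * b) * Rratio \<mu>"
    by (rule final_conv[OF bnds Pfin c0]) (use R_pos[of "-\<mu>"] in simp)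
  have meas: "(\<lambda>\<omega>. indicator AU \<omega> * X \<omega>) \<in> borel_measurable M"
  proof -
    have "(\<lambda>\<omega>. enn2real (\<Sum>n. aLf \<mu> b n (\<lambda>i. Z i \<omega>))) \<in> borel_measurable M" by measurable
    moreover have "\<And>\<omega>. \<omega> \<in> space M \<Longrightarrow> enn2real (\<Sum>n. aLf \<mu> b n (\<lambda>i. Z i \<omega>)) = indicator AU \<omega> * X \<omega>"
      unfolding AU_def X_def by (simp add: sumL(1)[symmetric])
    ultimately show ?thesis by (rule measurable_cong[THEN iffD1, rotated])
  qed
  have int_eq: "integral\<^sup>L M (\<lambda>\<omega>. indicator AU \<omega> * X \<omega>) = enn2real (suminf a)"
    unfolding A_eq[symmetric] by (rule integral_eq_nn_integral[OF meas]) (simp add: X_def)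
  have "cond_exp_event M X AU = enn2real (suminf a) / enn2real (suminf p)"
    unfolding cond_exp_event_def int_eq measure_def P_eq ..
  then show ?thesis using conv by simp
qed


end

theorem lemma5:
  fixes M :: "'a measure" and Z :: "nat \<Rightarrow> 'a \<Rightarrow> real" and \<mu> b :: real
  assumes "prob_space M"
    and "\<mu> > 0" and "b > 0"
    and "prob_space.indep_vars M (\<lambda>_. borel) Z {1..}"
    and "\<And>i. i \<ge> 1 \<Longrightarrow> distributed M lborel (Z i) (normal_density \<mu> 1)"
  defines "Aup \<equiv> {\<omega> \<in> space M. exits Z b \<omega> \<and> stopped_sum Z b \<omega> > b}"
    and "Alow \<equiv> {\<omega> \<in> space M. exits Z b \<omega> \<and> stopped_sum Z b \<omega> < - b}"
    and "X \<equiv> (\<lambda>\<omega>. exp (- 2 * \<mu> * stopped_sum Z b \<omega>))"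
  shows "Rratio (- \<mu>) * exp (- 2 * \<mu> * b) < cond_exp_event M X Aup
         \<and> cond_exp_event M X Aup < exp (- 2 * \<mu> * b)
         \<and> exp (2 * \<mu> * b) < cond_exp_event M X Alow
         \<and> cond_exp_event M X Alow < exp (2 * \<mu> * b) * Rratio \<mu>"
  proof -
  have "rw M Z \<mu> b" unfolding rw_def using assms by auto
  then interpret rw M Z \<mu> b .
  show ?thesis using up_result low_result unfolding Aup_def Alow_def X_def by auto
qed

end
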